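(* There is a polynomial-time algorithm that, given two configurations $C_s$ and $C_t$, each consisting of $n$ vertices of the infinite integer grid, decides whether there is a schedule with makespan $1$ transforming $C_s$ into $C_t$.
   Context: A configuration is a finite set $C$ of vertices of the infinite integer grid $\mathbb{Z}^2$ (robots are unlabeled and occupy these positions); it induces the subgraph $H$ of the grid with an edge between two positions iff they are at Euclidean distance $1$. A move $v\to w$ changes a robot's position from $v$ to a grid-adjacent position $w$, or keeps it ($w=v$). Two moves $v_1\to w_1$ and $v_2\to w_2$ are collision-free if $v_1\neq v_2$ and $w_1\neq w_2$. A transformation between configurations $C_1=\{v_1,\dots,v_n\}$ and $C_2=\{w_1,\dots,w_n\}$ is a set of pairwise collision-free moves $\{v_i\to w_i : i=1,\dots,n\}$. A schedule with makespan $M$ is a sequence $C_1\to C_2\to\cdots\to C_{M+1}$ of transformations. *)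

theory Defs
  imports Main
begin

type_synonym pos = "int \<times> int"

text \<open>A single move v \<rightarrow> w: w = v or w is grid-adjacent to v (Euclidean distance 1).\<close>
definition move_ok :: "pos \<Rightarrow> pos \<Rightarrow> bool" where
  "move_ok v w \<longleftrightarrow> w = v \<or> \<bar>fst v - fst w\<bar> + \<bar>snd v - snd w\<bar> = 1"

text \<open>A transformation C1 \<rightarrow> C2: a set of pairwise collision-free moves, one for each robot,
  i.e. a bijection between C1 and C2 moving each robot by a valid move.\<close>
definition transformation :: "pos set \<Rightarrow> pos set \<Rightarrow> bool" where
  "transformation C1 C2 \<longleftrightarrow>
     finite C1 \<and> finite C2 \<and> (\<exists>f. bij_betw f C1 C2 \<and> (\<forall>v\<in>C1. move_ok v (f v)))"

definition schedule :: "nat \<Rightarrow> pos set \<Rightarrow> pos set \<Rightarrow> bool" where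
  "schedule M Cs Ct \<longleftrightarrow>
     (\<exists>C :: nat \<Rightarrow> pos set. C 0 = Cs \<and> C M = Ct \<and>
        (\<forall>i<M. transformation (C i) (C (Suc i))))"

text \<open>Memory cells are indexed by integers and hold integers. No multiplication, so
  unit cost is polynomially equivalent to Turing machines.\<close>
datatype instr =
    LoadConst int int
  | Add int int int
  | Sub int int int
  | Load int int
  | Store int int
  | Jz int nat
  | Jgtz int nat
  | Halt

type_synonym ram_state = "nat \<times> (int \<Rightarrow> int)"

definition halted :: "instr list \<Rightarrow> ram_state \<Rightarrow> bool" where
  "halted P s \<longleftrightarrow> fst s \<ge> length P \<or> P ! fst s = Halt"

fun exec :: "instr \<Rightarrow> ram_state \<Rightarrow> ram_state" where
  "exec (LoadConst a c) (pc, m) = (Suc pc, m(a := c))"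
| "exec (Add a b c) (pc, m) = (Suc pc, m(a := m b + m c))"
| "exec (Sub a b c) (pc, m) = (Suc pc, m(a := m b - m c))"
| "exec (Load a b) (pc, m) = (Suc pc, m(a := m (m b)))"
| "exec (Store a b) (pc, m) = (Suc pc, m(m a := m b))"
| "exec (Jz a l) (pc, m) = (if m a = 0 then l else Suc pc, m)"
| "exec (Jgtz a l) (pc, m) = (if m a > 0 then l else Suc pc, m)"
| "exec Halt s = s"

definition step :: "instr list \<Rightarrow> ram_state \<Rightarrow> ram_state" where
  "step P s = (if halted P s then s else exec (P ! fst s) s)"

definition init :: "int list \<Rightarrow> ram_state" where
  "init xs = (0, \<lambda>i. if 0 \<le> i \<and> i < int (length xs) then xs ! nat i else 0)"

definition decides_in :: "instr list \<Rightarrow> int list \<Rightarrow> nat \<Rightarrow> bool \<Rightarrow> bool" where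
  "decides_in P xs t b \<longleftrightarrow>
     halted P ((step P ^^ t) (init xs)) \<and> (snd ((step P ^^ t) (init xs)) 0 > 0 \<longleftrightarrow> b)"

definition bitlen :: "int \<Rightarrow> nat" where
  "bitlen x = (LEAST k. \<bar>x\<bar> < 2 ^ k)"

definition input_size :: "int list \<Rightarrow> nat" where
  "input_size xs = length xs + sum_list (map bitlen xs)"

definition enc_pts :: "pos list \<Rightarrow> int list" where
  "enc_pts ps = concat (map (\<lambda>(x, y). [x, y]) ps)"

definition enc_instance :: "pos list \<Rightarrow> pos list \<Rightarrow> int list" where
  "enc_instance Cs Ct = int (length Cs) # enc_pts Cs @ enc_pts Ct"

end

theory Submission
  imports Defs
begin

declare One_nat_def[simp del]

definition reach :: "instr list \<Rightarrow> ram_state \<Rightarrow> nat \<Rightarrow> (ram_state \<Rightarrow> bool) \<Rightarrow> bool" where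
  "reach P s T Q \<longleftrightarrow> (\<exists>k\<le>T. Q ((step P ^^ k) s))"

lemma reach_done: "Q s \<Longrightarrow> reach P s T Q"
  unfolding reach_def by (rule exI[of _ 0]) auto

lemma reach_mono: "reach P s T Q \<Longrightarrow> T \<le> T' \<Longrightarrow> (\<And>s. Q s \<Longrightarrow> Q' s) \<Longrightarrow> reach P s T' Q'"
  unfolding reach_def by (meson order_trans)

lemma reach_trans:
  assumes "reach P s T1 R" "\<And>s'. R s' \<Longrightarrow> reach P s' T2 Q"
  shows "reach P s (T1 + T2) Q"
proof -
  from assms(1) obtain k where k: "k \<le> T1" "R ((step P ^^ k) s)" unfolding reach_def by auto
  from assms(2)[OF k(2)] obtain k' where k': "k' \<le> T2" "Q ((step P ^^ k') ((step P ^^ k) s))"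
    unfolding reach_def by auto
  have "(step P ^^ (k' + k)) s = (step P ^^ k') ((step P ^^ k) s)" by (simp add: funpow_add)
  with k k' show ?thesis unfolding reach_def by (intro exI[of _ "k'+k"]) auto
qed

lemma reach_step:
  assumes "\<not> halted P s" "reach P (exec (P ! fst s) s) T Q"
  shows "reach P s (Suc T) Q"
proof -
  from assms(2) obtain k where k: "k \<le> T" "Q ((step P ^^ k) (exec (P ! fst s) s))" unfolding reach_def by auto
  have "(step P ^^ Suc k) s = (step P ^^ k) (step P s)" by (simp add: funpow_Suc_right del: funpow.simps)
  also have "step P s = exec (P ! fst s) s" using assms(1) by (simp add: step_def)
  finally show ?thesis using k unfolding reach_def by (intro exI[of _ "Suc k"]) auto
qed

lemma reach_ins:
  assumes "P ! pc = ins" "pc < length P" "ins \<noteq> Halt" "0 < T" "reach P (exec ins (pc, m)) (T - 1) Q"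
  shows "reach P (pc, m) T Q"
proof -
  have "\<not> halted P (pc, m)" using assms by (simp add: halted_def)
  then have "reach P (pc, m) (Suc (T - 1)) Q" using reach_step[of P "(pc,m)" "T - 1" Q] assms by simp
  then show ?thesis using assms(4) by simp
qed

lemma reach_loop:
  fixes \<mu> :: "ram_state \<Rightarrow> nat"
  assumes step: "\<And>s. I s \<Longrightarrow> reach P s B (\<lambda>s'. Q s' \<or> (I s' \<and> \<mu> s' < \<mu> s))"
  shows "I s \<Longrightarrow> reach P s ((\<mu> s + 1) * B) Q"
proof (induction "\<mu> s" arbitrary: s rule: less_induct)
  case (less s)
  have "reach P s (B + \<mu> s * B) Q"
  proof (rule reach_trans[OF step[OF less.prems]])
    fix s' assume "Q s' \<or> I s' \<and> \<mu> s' < \<mu> s"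
    then show "reach P s' (\<mu> s * B) Q"
    proof
      assume "Q s'" then show ?thesis by (rule reach_done)
    next
      assume a: "I s' \<and> \<mu> s' < \<mu> s"
      then have "reach P s' ((\<mu> s' + 1) * B) Q" using less by blast
      moreover have "(\<mu> s' + 1) * B \<le> \<mu> s * B" using a by (intro mult_right_mono) auto
      ultimately show ?thesis by (rule reach_mono) auto
    qed
  qed
  then show ?case by (simp add: algebra_simps)
qed

lemma exec_simps[simp]:
  "exec (LoadConst a c) (pc, m) = (pc + 1, m(a := c))"
  "exec (Add a b c) (pc, m) = (pc + 1, m(a := m b + m c))"
  "exec (Sub a b c) (pc, m) = (pc + 1, m(a := m b - m c))"
  "exec (Load a b) (pc, m) = (pc + 1, m(a := m (m b)))"
  "exec (Store a b) (pc, m) = (pc + 1, m(m a := m b))"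
  "exec (Jz a l) (pc, m) = (if m a = 0 then l else pc + 1, m)"
  "exec (Jgtz a l) (pc, m) = (if m a > 0 then l else pc + 1, m)"
  by simp_all

declare exec.simps[simp del]

definition prog :: "instr list" where
  "prog = [
    LoadConst (-1) 1,
    Sub (-11) (-1) 0,
    Jgtz (-11) 105,
    LoadConst (-12) (-107),
    Store (-12) (-1),
    LoadConst (-3) 1,
    LoadConst (-2) 1,
    Sub (-11) (-2) (-3),
    Jgtz (-11) 107,
    Add (-12) (-2) (-2),
    Add (-12) (-12) (-12),
    LoadConst (-13) (-103),
    Sub (-12) (-13) (-12),
    Load (-4) (-12),
    LoadConst (-5) 1,
    Sub (-11) (-5) 0,
    Jgtz (-11) 75,
    Add (-12) (-5) (-5),
    Add (-12) (-12) (-12),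
    LoadConst (-13) (-101),
    Sub (-14) (-13) (-12),
    Load (-15) (-14),
    Sub (-15) (-15) (-1),
    Jz (-15) 71,
    Add (-16) (-4) (-4),
    Load (-17) (-16),
    LoadConst (-18) 1,
    Sub (-16) (-16) (-18),
    Load (-19) (-16),
    Add (-16) (-5) (-5),
    Add (-16) (-16) 0,
    Add (-16) (-16) 0,
    Load (-20) (-16),
    Sub (-16) (-16) (-18),
    Load (-21) (-16),
    Sub (-19) (-19) (-21),
    Jgtz (-19) 39,
    LoadConst (-22) 0,
    Sub (-19) (-22) (-19),
    Sub (-17) (-17) (-20),
    Jgtz (-17) 43,
    LoadConst (-22) 0,
    Sub (-17) (-22) (-17),
    Add (-19) (-19) (-17),
    Sub (-19) (-19) (-18),
    Jgtz (-19) 71,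
    Store (-14) (-1),
    LoadConst (-13) (-102),
    Sub (-14) (-13) (-12),
    Store (-14) (-2),
    LoadConst (-6) 1,
    Sub (-11) (-6) 0,
    Jgtz (-11) 79,
    Add (-12) (-6) (-6),
    Add (-12) (-12) (-12),
    LoadConst (-13) (-100),
    Sub (-12) (-13) (-12),
    Load (-15) (-12),
    Sub (-15) (-15) (-5),
    Jz (-15) 64,
    LoadConst (-18) 1,
    Add (-6) (-6) (-18),
    LoadConst (-22) 0,
    Jz (-22) 51,
    LoadConst (-18) 1,
    Add (-3) (-3) (-18),
    Add (-12) (-3) (-3),
    Add (-12) (-12) (-12),
    LoadConst (-13) (-103),
    Sub (-12) (-13) (-12),
    Store (-12) (-6),
    LoadConst (-18) 1,
    Add (-5) (-5) (-18),
    LoadConst (-22) 0,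
    Jz (-22) 15,
    LoadConst (-18) 1,
    Add (-2) (-2) (-18),
    LoadConst (-22) 0,
    Jz (-22) 7,
    Add (-12) (-5) (-5),
    Add (-12) (-12) (-12),
    LoadConst (-13) (-102),
    Sub (-12) (-13) (-12),
    Load (-2) (-12),
    Add (-12) (-2) (-2),
    Add (-12) (-12) (-12),
    LoadConst (-13) (-103),
    Sub (-12) (-13) (-12),
    Load (-4) (-12),
    Add (-12) (-4) (-4),
    Add (-12) (-12) (-12),
    LoadConst (-13) (-100),
    Sub (-12) (-13) (-12),
    Load (-15) (-12),
    Store (-12) (-5),
    LoadConst (-18) 1,
    Sub (-11) (-2) (-18),
    Jz (-11) 101,
    LoadConst (-22) 0,
    Add (-5) (-15) (-22),
    Jz (-22) 79,
    LoadConst (-18) 1,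
    Add (-1) (-1) (-18),
    LoadConst (-22) 0,
    Jz (-22) 1,
    LoadConst 0 1,
    Halt,
    LoadConst 0 0,
    Halt]"

lemma prog_len: "length prog = 109" by (simp add: prog_def)

lemma prog_fetch:
  "prog ! 0 = LoadConst (-1) 1"
  "prog ! 1 = Sub (-11) (-1) 0"
  "prog ! 2 = Jgtz (-11) 105"
  "prog ! 3 = LoadConst (-12) (-107)"
  "prog ! 4 = Store (-12) (-1)"
  "prog ! 5 = LoadConst (-3) 1"
  "prog ! 6 = LoadConst (-2) 1"
  "prog ! 7 = Sub (-11) (-2) (-3)"
  "prog ! 8 = Jgtz (-11) 107"
  "prog ! 9 = Add (-12) (-2) (-2)"
  "prog ! 10 = Add (-12) (-12) (-12)"
  "prog ! 11 = LoadConst (-13) (-103)"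
  "prog ! 12 = Sub (-12) (-13) (-12)"
  "prog ! 13 = Load (-4) (-12)"
  "prog ! 14 = LoadConst (-5) 1"
  "prog ! 15 = Sub (-11) (-5) 0"
  "prog ! 16 = Jgtz (-11) 75"
  "prog ! 17 = Add (-12) (-5) (-5)"
  "prog ! 18 = Add (-12) (-12) (-12)"
  "prog ! 19 = LoadConst (-13) (-101)"
  "prog ! 20 = Sub (-14) (-13) (-12)"
  "prog ! 21 = Load (-15) (-14)"
  "prog ! 22 = Sub (-15) (-15) (-1)"
  "prog ! 23 = Jz (-15) 71"
  "prog ! 24 = Add (-16) (-4) (-4)"
  "prog ! 25 = Load (-17) (-16)"
  "prog ! 26 = LoadConst (-18) 1"
  "prog ! 27 = Sub (-16) (-16) (-18)"
  "prog ! 28 = Load (-19) (-16)"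
  "prog ! 29 = Add (-16) (-5) (-5)"
  "prog ! 30 = Add (-16) (-16) 0"
  "prog ! 31 = Add (-16) (-16) 0"
  "prog ! 32 = Load (-20) (-16)"
  "prog ! 33 = Sub (-16) (-16) (-18)"
  "prog ! 34 = Load (-21) (-16)"
  "prog ! 35 = Sub (-19) (-19) (-21)"
  "prog ! 36 = Jgtz (-19) 39"
  "prog ! 37 = LoadConst (-22) 0"
  "prog ! 38 = Sub (-19) (-22) (-19)"
  "prog ! 39 = Sub (-17) (-17) (-20)"
  "prog ! 40 = Jgtz (-17) 43"
  "prog ! 41 = LoadConst (-22) 0"
  "prog ! 42 = Sub (-17) (-22) (-17)"
  "prog ! 43 = Add (-19) (-19) (-17)"
  "prog ! 44 = Sub (-19) (-19) (-18)"
  "prog ! 45 = Jgtz (-19) 71"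
  "prog ! 46 = Store (-14) (-1)"
  "prog ! 47 = LoadConst (-13) (-102)"
  "prog ! 48 = Sub (-14) (-13) (-12)"
  "prog ! 49 = Store (-14) (-2)"
  "prog ! 50 = LoadConst (-6) 1"
  "prog ! 51 = Sub (-11) (-6) 0"
  "prog ! 52 = Jgtz (-11) 79"
  "prog ! 53 = Add (-12) (-6) (-6)"
  "prog ! 54 = Add (-12) (-12) (-12)"
  "prog ! 55 = LoadConst (-13) (-100)"
  "prog ! 56 = Sub (-12) (-13) (-12)"
  "prog ! 57 = Load (-15) (-12)"
  "prog ! 58 = Sub (-15) (-15) (-5)"
  "prog ! 59 = Jz (-15) 64"
  "prog ! 60 = LoadConst (-18) 1"
  "prog ! 61 = Add (-6) (-6) (-18)"
  "prog ! 62 = LoadConst (-22) 0"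
  "prog ! 63 = Jz (-22) 51"
  "prog ! 64 = LoadConst (-18) 1"
  "prog ! 65 = Add (-3) (-3) (-18)"
  "prog ! 66 = Add (-12) (-3) (-3)"
  "prog ! 67 = Add (-12) (-12) (-12)"
  "prog ! 68 = LoadConst (-13) (-103)"
  "prog ! 69 = Sub (-12) (-13) (-12)"
  "prog ! 70 = Store (-12) (-6)"
  "prog ! 71 = LoadConst (-18) 1"
  "prog ! 72 = Add (-5) (-5) (-18)"
  "prog ! 73 = LoadConst (-22) 0"
  "prog ! 74 = Jz (-22) 15"
  "prog ! 75 = LoadConst (-18) 1"
  "prog ! 76 = Add (-2) (-2) (-18)"
  "prog ! 77 = LoadConst (-22) 0"
  "prog ! 78 = Jz (-22) 7"
  "prog ! 79 = Add (-12) (-5) (-5)"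
  "prog ! 80 = Add (-12) (-12) (-12)"
  "prog ! 81 = LoadConst (-13) (-102)"
  "prog ! 82 = Sub (-12) (-13) (-12)"
  "prog ! 83 = Load (-2) (-12)"
  "prog ! 84 = Add (-12) (-2) (-2)"
  "prog ! 85 = Add (-12) (-12) (-12)"
  "prog ! 86 = LoadConst (-13) (-103)"
  "prog ! 87 = Sub (-12) (-13) (-12)"
  "prog ! 88 = Load (-4) (-12)"
  "prog ! 89 = Add (-12) (-4) (-4)"
  "prog ! 90 = Add (-12) (-12) (-12)"
  "prog ! 91 = LoadConst (-13) (-100)"
  "prog ! 92 = Sub (-12) (-13) (-12)"
  "prog ! 93 = Load (-15) (-12)"
  "prog ! 94 = Store (-12) (-5)"
  "prog ! 95 = LoadConst (-18) 1"
  "prog ! 96 = Sub (-11) (-2) (-18)"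
  "prog ! 97 = Jz (-11) 101"
  "prog ! 98 = LoadConst (-22) 0"
  "prog ! 99 = Add (-5) (-15) (-22)"
  "prog ! 100 = Jz (-22) 79"
  "prog ! 101 = LoadConst (-18) 1"
  "prog ! 102 = Add (-1) (-1) (-18)"
  "prog ! 103 = LoadConst (-22) 0"
  "prog ! 104 = Jz (-22) 1"
  "prog ! 105 = LoadConst 0 1"
  "prog ! 106 = Halt"
  "prog ! 107 = LoadConst 0 0"
  "prog ! 108 = Halt"
  by (simp_all add: prog_def)

lemma prog_fetch1[simp]: "prog ! Suc 0 = Sub (-11) (-1) 0"
  using prog_fetch(2) by (simp add: One_nat_def)

lemma reach_ins':
  assumes "pc < length P" "P ! pc \<noteq> Halt" "0 < T" "reach P (exec (P ! pc) (pc, m)) (T - 1) Q"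
  shows "reach P (pc, m) T Q"
  using reach_ins[OF refl assms] .

definition aK :: "int \<Rightarrow> int \<Rightarrow> int" where "aK k x = -4 * x - 100 - k"
definition arr :: "int \<Rightarrow> (int \<Rightarrow> int) \<Rightarrow> int \<Rightarrow> int" where
  "arr k m x = (if 1 \<le> x then m (aK k x) else 0)"

lemma aK_ne_scalar[simp]: "1 \<le> x \<Longrightarrow> 0 \<le> k \<Longrightarrow> -100 < c \<Longrightarrow> (c = aK k x) = False"
  "1 \<le> x \<Longrightarrow> 0 \<le> k \<Longrightarrow> -100 < c \<Longrightarrow> (aK k x = c) = False"
  by (auto simp: aK_def)

lemma aK_eq_iff[simp]: "0 \<le> k \<Longrightarrow> k \<le> 3 \<Longrightarrow> 0 \<le> k' \<Longrightarrow> k' \<le> 3 \<Longrightarrow> (aK k x = aK k' y) = (k = k' \<and> x = y)"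
  unfolding aK_def by presburger

lemma arr_upd_scalar[simp]: "-100 < c \<Longrightarrow> 0 \<le> k \<Longrightarrow> arr k (m(c := v)) = arr k m"
  by (auto simp: arr_def fun_eq_iff aK_def)

lemma arr_upd_arr[simp]: "1 \<le> y \<Longrightarrow> 0 \<le> k \<Longrightarrow> k \<le> 3 \<Longrightarrow> 0 \<le> k' \<Longrightarrow> k' \<le> 3 \<Longrightarrow>
  arr k (m(aK k' y := v)) = (if k = k' then (arr k m)(y := v) else arr k m)"
  by (auto simp: arr_def fun_eq_iff)

lemma read_arr[simp]: "1 \<le> x \<Longrightarrow> m (aK k x) = arr k m x"
  by (simp add: arr_def)

lemma addr_lemmas[simp]:
  "- 100 - 4 * x = aK 0 x"
  "- 101 - 4 * x = aK 1 x"
  "- 102 - 4 * x = aK 2 x"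
  "- 103 - 4 * x = aK 3 x"
  "- 107 - 4 * x = aK 3 (x + 1)"
  by (simp_all add: aK_def)


definition atS :: "nat set \<Rightarrow> (ram_state \<Rightarrow> bool) \<Rightarrow> ram_state \<Rightarrow> bool" where
  "atS A Q s \<longleftrightarrow> fst s \<in> A \<and> Q s"

lemma reach_ins'':
  assumes "pc \<notin> A" "pc < length P" "P ! pc \<noteq> Halt" "0 < T" "reach P (exec (P ! pc) (pc, m)) (T - 1) (atS A Q)"
  shows "reach P (pc, m) T (atS A Q)"
  using reach_ins[OF refl assms(2-)] .

lemma reach_stop:
  assumes "pc \<in> A" "Q (pc, m)"
  shows "reach P (pc, m) T (atS A Q)"
  using assms by (intro reach_done) (simp add: atS_def)

definition G :: "(int \<Rightarrow> int) \<Rightarrow> (int \<Rightarrow> int) \<Rightarrow> bool" where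
  "G m0 m \<longleftrightarrow> m 0 = m0 0 \<and> (\<forall>a. 1 \<le> a \<longrightarrow> m a = m0 a)"

lemma aK_ne_scalar'[simp]: "0 \<le> x \<Longrightarrow> 0 \<le> k \<Longrightarrow> -100 < c \<Longrightarrow> (c = aK k (x + 1)) = False"
  "0 \<le> x \<Longrightarrow> 0 \<le> k \<Longrightarrow> -100 < c \<Longrightarrow> (aK k (x + 1) = c) = False"
  by (auto simp: aK_def)

lemma G_upd[simp]: "c < 0 \<Longrightarrow> G m0 (m(c := v)) = G m0 m"
  by (auto simp: G_def)

lemma aK_neg[simp]: "1 \<le> x \<Longrightarrow> 0 \<le> k \<Longrightarrow> aK k x < 0"
  by (simp add: aK_def)


lemma arr_upd_107[simp]: "0 \<le> k \<Longrightarrow> k \<le> 3 \<Longrightarrow> arr k (m(-107 := v)) = (if k = 3 then (arr k m)(1 := v) else arr k m)"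
proof -
  have "(-107::int) = aK 3 1" by (simp add: aK_def)
  moreover assume "0 \<le> k" "k \<le> 3"
  ultimately show ?thesis by (simp only:) (rule arr_upd_arr, auto)
qed

definition vw :: "(int \<Rightarrow> int) \<Rightarrow> _" where
  "vw m = (arr 0 m, arr 1 m, arr 2 m, arr 3 m, m (-1), m (-2), m (-3), m (-4), m (-5), m (-6))"

definition adjm :: "(int \<Rightarrow> int) \<Rightarrow> int \<Rightarrow> int \<Rightarrow> int \<Rightarrow> bool" where
  "adjm m0 n i j \<longleftrightarrow> \<bar>m0 (2*i-1) - m0 (2*n+2*j-1)\<bar> + \<bar>m0 (2*i) - m0 (2*n+2*j)\<bar> \<le> 1"

lemma G_read: "G m0 m \<Longrightarrow> 1 \<le> a \<Longrightarrow> m a = m0 a"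
  by (simp add: G_def)

lemma sym_start:
  assumes "pc < length P" "P ! pc \<noteq> Halt" "0 < T" "reach P (exec (P ! pc) (pc, m)) (T - 1) Q"
  shows "reach P (pc, m) T Q"
  using reach_ins[OF refl assms] .

lemmas vsimps = vw_def

lemma blk_init:
  assumes "G m0 m"
  shows "reach prog (0, m) 1 (\<lambda>s. fst s = 1 \<and> G m0 (snd s) \<and> vw (snd s) = vw ((snd s)(-1 := 1)) \<and> snd s (-1) = 1 \<and> vw (snd s) = vw (m(-1 := 1)))"
  using assms
  apply -
  apply (rule sym_start, simp_all add: prog_fetch prog_len)
  apply (rule reach_done)
  apply simp
  done

lemma blk_outer:
  assumes "G m0 m" "m0 0 = n" "arr 0 m = MT" "arr 1 m = IT" "arr 2 m = PAR" "arr 3 m = QQ"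
    "m (-1) = r" "m (-2) = p" "m (-3) = qe" "m (-4) = i" "m (-5) = j" "m (-6) = k" 
  shows "reach prog (1, m) 10 (atS {106, 7} (\<lambda>s. (fst s = 106 \<longrightarrow> n < r \<and> snd s 0 = 1) \<and>
     (fst s = 7 \<longrightarrow> r \<le> n \<and> G m0 (snd s) \<and> vw (snd s) = (MT, IT, PAR, QQ(1 := r), r, 1, 1, i, j, k))))"
proof -
  have m0: "m 0 = n" using assms by (simp add: G_def)
  
  show ?thesis
  using assms m0 
  apply -
  
  apply ((rule reach_ins'', (simp; fail), simp add: prog_len, simp add: prog_fetch, simp, simp add: prog_fetch) | (rule reach_stop, (simp; fail), (auto simp: vw_def adjm_def; fail)) | (intro conjI impI))+
  done
qed

lemma blk_bfs:
  assumes "G m0 m" "m0 0 = n" "arr 0 m = MT" "arr 1 m = IT" "arr 2 m = PAR" "arr 3 m = QQ"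
    "m (-1) = r" "m (-2) = p" "m (-3) = qe" "m (-4) = i" "m (-5) = j" "m (-6) = k" "1 \<le> p"
  shows "reach prog (7, m) 10 (atS {108, 15} (\<lambda>s. (fst s = 108 \<longrightarrow> qe < p \<and> snd s 0 = 0) \<and>
     (fst s = 15 \<longrightarrow> p \<le> qe \<and> G m0 (snd s) \<and> vw (snd s) = (MT, IT, PAR, QQ, r, p, qe, QQ p, 1, k))))"
proof -
  have m0: "m 0 = n" using assms by (simp add: G_def)
  
  show ?thesis
  using assms m0 
  apply -
  
  apply ((rule reach_ins'', (simp; fail), simp add: prog_len, simp add: prog_fetch, simp, simp add: prog_fetch) | (rule reach_stop, (simp; fail), (auto simp: vw_def adjm_def; fail)) | (intro conjI impI))+
  done
qed

lemma blk_j: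
  assumes "G m0 m" "m0 0 = n" "arr 0 m = MT" "arr 1 m = IT" "arr 2 m = PAR" "arr 3 m = QQ"
    "m (-1) = r" "m (-2) = p" "m (-3) = qe" "m (-4) = i" "m (-5) = j" "m (-6) = k" "1 \<le> i" "1 \<le> j" "0 \<le> n"
  shows "reach prog (15, m) 40 (atS {7, 15, 51} (\<lambda>s. (fst s = 7 \<longrightarrow> n < j \<and> G m0 (snd s) \<and> vw (snd s) = (MT, IT, PAR, QQ, r, p + 1, qe, i, j, k)) \<and>
     (fst s = 15 \<longrightarrow> j \<le> n \<and> (IT j = r \<or> \<not> adjm m0 n i j) \<and> G m0 (snd s) \<and> vw (snd s) = (MT, IT, PAR, QQ, r, p, qe, i, j + 1, k)) \<and>
     (fst s = 51 \<longrightarrow> j \<le> n \<and> IT j \<noteq> r \<and> adjm m0 n i j \<and> G m0 (snd s) \<and> vw (snd s) = (MT, IT(j := r), PAR(j := p), QQ, r, p, qe, i, j, 1))))"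
proof -
  have m0: "m 0 = n" using assms by (simp add: G_def)
  have facts: "m (2*i) = m0 (2*i)" "m (2*i - 1) = m0 (2*i - 1)" "m (2*n + 2*j) = m0 (2*n + 2*j)" "m (2*n + 2*j - 1) = m0 (2*n + 2*j - 1)"
    using assms G_def[of m0 m] by auto
  show ?thesis
  using assms m0 facts
  apply -
  apply (rule sym_start, simp add: prog_len, simp add: prog_fetch, simp, simp add: prog_fetch)
  apply ((rule reach_ins'', (simp; fail), simp add: prog_len, simp add: prog_fetch, simp, simp add: prog_fetch) | (rule reach_stop, (simp; fail), (auto simp: vw_def adjm_def; fail)) | (intro conjI impI))+
  done
qed

lemma blk_k:
  assumes "G m0 m" "m0 0 = n" "arr 0 m = MT" "arr 1 m = IT" "arr 2 m = PAR" "arr 3 m = QQ"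
    "m (-1) = r" "m (-2) = p" "m (-3) = qe" "m (-4) = i" "m (-5) = j" "m (-6) = k" "1 \<le> k" "0 \<le> qe"
  shows "reach prog (51, m) 25 (atS {79, 15, 51} (\<lambda>s. (fst s = 79 \<longrightarrow> n < k \<and> G m0 (snd s) \<and> vw (snd s) = (MT, IT, PAR, QQ, r, p, qe, i, j, k)) \<and>
     (fst s = 15 \<longrightarrow> k \<le> n \<and> MT k = j \<and> G m0 (snd s) \<and> vw (snd s) = (MT, IT, PAR, QQ(qe + 1 := k), r, p, qe + 1, i, j + 1, k)) \<and>
     (fst s = 51 \<longrightarrow> k \<le> n \<and> MT k \<noteq> j \<and> G m0 (snd s) \<and> vw (snd s) = (MT, IT, PAR, QQ, r, p, qe, i, j, k + 1))))"
proof -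
  have m0: "m 0 = n" using assms by (simp add: G_def)
  
  show ?thesis
  using assms m0 
  apply -
  apply (rule sym_start, simp add: prog_len, simp add: prog_fetch, simp, simp add: prog_fetch)
  apply ((rule reach_ins'', (simp; fail), simp add: prog_len, simp add: prog_fetch, simp, simp add: prog_fetch) | (rule reach_stop, (simp; fail), (auto simp: vw_def adjm_def; fail)) | (intro conjI impI))+
  done
qed

lemma blk_aug:
  assumes "G m0 m" "m0 0 = n" "arr 0 m = MT" "arr 1 m = IT" "arr 2 m = PAR" "arr 3 m = QQ"
    "m (-1) = r" "m (-2) = p" "m (-3) = qe" "m (-4) = i" "m (-5) = j" "m (-6) = k" "1 \<le> j" "1 \<le> PAR j" "1 \<le> QQ (PAR j)"
  shows "reach prog (79, m) 30 (atS {1, 79} (\<lambda>s. (fst s = 1 \<longrightarrow> PAR j = 1 \<and> G m0 (snd s) \<and> vw (snd s) = (MT(QQ (PAR j) := j), IT, PAR, QQ, r + 1, PAR j, qe, QQ (PAR j), j, k)) \<and>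
     (fst s = 79 \<longrightarrow> PAR j \<noteq> 1 \<and> G m0 (snd s) \<and> vw (snd s) = (MT(QQ (PAR j) := j), IT, PAR, QQ, r, PAR j, qe, QQ (PAR j), MT (QQ (PAR j)), k))))"
proof -
  have m0: "m 0 = n" using assms by (simp add: G_def)
  
  show ?thesis
  using assms m0 
  apply -
  apply (rule sym_start, simp add: prog_len, simp add: prog_fetch, simp, simp add: prog_fetch)
  apply ((rule reach_ins'', (simp; fail), simp add: prog_len, simp add: prog_fetch, simp, simp add: prog_fetch) | (rule reach_stop, (simp; fail), (auto simp: vw_def adjm_def; fail)) | (intro conjI impI))+
  done
qed



definition match_inv :: "int \<Rightarrow> (int \<Rightarrow> int \<Rightarrow> bool) \<Rightarrow> (int \<Rightarrow> int) \<Rightarrow> int \<Rightarrow> bool" where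
  "match_inv n A MT r \<longleftrightarrow>
    (\<forall>i. 1 \<le> i \<and> i \<le> n \<longrightarrow> 0 \<le> MT i \<and> MT i \<le> n \<and> (MT i = 0 \<longleftrightarrow> r \<le> i) \<and> (MT i \<noteq> 0 \<longrightarrow> A i (MT i))) \<and>
    (\<forall>i i'. 1 \<le> i \<and> i \<le> n \<and> 1 \<le> i' \<and> i' \<le> n \<and> MT i \<noteq> 0 \<and> MT i = MT i' \<longrightarrow> i = i')"

definition bfs_core :: "int \<Rightarrow> (int \<Rightarrow> int \<Rightarrow> bool) \<Rightarrow> (int \<Rightarrow> int) \<Rightarrow> (int \<Rightarrow> int) \<Rightarrow> (int \<Rightarrow> int) \<Rightarrow> (int \<Rightarrow> int) \<Rightarrow> int \<Rightarrow> int \<Rightarrow> bool" where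
  "bfs_core n A MT IT PAR QQ r qe \<longleftrightarrow>
    1 \<le> r \<and> r \<le> n \<and> match_inv n A MT r \<and> 1 \<le> qe \<and> qe \<le> n \<and> QQ 1 = r \<and>
    (\<forall>q. 1 \<le> q \<and> q \<le> qe \<longrightarrow> 1 \<le> QQ q \<and> QQ q \<le> n) \<and>
    (\<forall>q q'. 1 \<le> q \<and> q \<le> qe \<and> 1 \<le> q' \<and> q' \<le> qe \<and> QQ q = QQ q' \<longrightarrow> q = q') \<and>
    (\<forall>j. 1 \<le> j \<and> j \<le> n \<longrightarrow> 0 \<le> IT j \<and> IT j \<le> r) \<and>
    (\<forall>q. 2 \<le> q \<and> q \<le> qe \<longrightarrow> MT (QQ q) \<noteq> 0 \<and> IT (MT (QQ q)) = r \<and> 1 \<le> PAR (MT (QQ q)) \<and> PAR (MT (QQ q)) < q) \<and>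
    (\<forall>j. 1 \<le> j \<and> j \<le> n \<and> IT j = r \<longrightarrow> 1 \<le> PAR j \<and> PAR j \<le> qe \<and> A (QQ (PAR j)) j)"

definition cov :: "int \<Rightarrow> (int \<Rightarrow> int) \<Rightarrow> (int \<Rightarrow> int) \<Rightarrow> (int \<Rightarrow> int) \<Rightarrow> int \<Rightarrow> int \<Rightarrow> int \<Rightarrow> bool" where
  "cov n MT IT QQ r qe x \<longleftrightarrow> (\<forall>j. 1 \<le> j \<and> j \<le> n \<and> IT j = r \<and> j \<noteq> x \<longrightarrow> (\<exists>q. 2 \<le> q \<and> q \<le> qe \<and> MT (QQ q) = j))"

definition clos :: "int \<Rightarrow> (int \<Rightarrow> int \<Rightarrow> bool) \<Rightarrow> (int \<Rightarrow> int) \<Rightarrow> (int \<Rightarrow> int) \<Rightarrow> int \<Rightarrow> int \<Rightarrow> bool" where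
  "clos n A QQ IT r p \<longleftrightarrow> (\<forall>q j. 1 \<le> q \<and> q < p \<and> 1 \<le> j \<and> j \<le> n \<and> A (QQ q) j \<longrightarrow> IT j = r)"

definition pclos :: "int \<Rightarrow> (int \<Rightarrow> int \<Rightarrow> bool) \<Rightarrow> int \<Rightarrow> (int \<Rightarrow> int) \<Rightarrow> int \<Rightarrow> int \<Rightarrow> bool" where
  "pclos n A i IT r jj \<longleftrightarrow> (\<forall>j. 1 \<le> j \<and> j < jj \<and> j \<le> n \<and> A i j \<longrightarrow> IT j = r)"

definition parb :: "int \<Rightarrow> (int \<Rightarrow> int) \<Rightarrow> (int \<Rightarrow> int) \<Rightarrow> int \<Rightarrow> int \<Rightarrow> bool" where
  "parb n IT PAR r p \<longleftrightarrow> (\<forall>j. 1 \<le> j \<and> j \<le> n \<and> IT j = r \<longrightarrow> PAR j \<le> p)"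

definition PM :: "int \<Rightarrow> (int \<Rightarrow> int \<Rightarrow> bool) \<Rightarrow> bool" where
  "PM n A \<longleftrightarrow> (\<exists>g. (\<forall>i. 1 \<le> i \<and> i \<le> n \<longrightarrow> 1 \<le> g i \<and> g i \<le> n \<and> A i (g i)) \<and> inj_on g {1..n})"

lemma T1:
  assumes "match_inv n A MT r" "1 \<le> r" "r \<le> n" "\<forall>j. 1 \<le> j \<and> j \<le> n \<longrightarrow> 0 \<le> IT j \<and> IT j < r"
  shows "bfs_core n A MT IT PAR (QQ(1 := r)) r 1 \<and> cov n MT IT (QQ(1 := r)) r 1 0 \<and>
         clos n A (QQ(1 := r)) IT r 1 \<and> parb n IT PAR r 0"
  using assms unfolding bfs_core_def cov_def clos_def parb_def
  apply (intro conjI)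
  apply (auto simp: fun_upd_def)
  done


lemma T2:
  assumes "parb n IT PAR r (p - 1)"
  shows "parb n IT PAR r p" "pclos n A i IT r 1"
  using assms unfolding parb_def pclos_def by auto

lemma T3:
  assumes "clos n A QQ IT r p" "pclos n A (QQ p) IT r (n + 1)"
  shows "clos n A QQ IT r (p + 1)"
  unfolding clos_def
proof (intro allI impI)
  fix q j assume a: "1 \<le> q \<and> q < p + 1 \<and> 1 \<le> j \<and> j \<le> n \<and> A (QQ q) j"
  show "IT j = r"
  proof (cases "q = p")
    case True then show ?thesis using assms(2) a unfolding pclos_def by auto
  next
    case False
    then have "q < p" using a by auto
    then show ?thesis using assms(1) a unfolding clos_def by blast
  qed
qed

lemma T4:
  assumes "pclos n A i IT r j" "IT j = r \<or> \<not> A i j"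
  shows "pclos n A i IT r (j + 1)"
  unfolding pclos_def
proof (intro allI impI)
  fix j' assume a: "1 \<le> j' \<and> j' < j + 1 \<and> j' \<le> n \<and> A i j'"
  show "IT j' = r"
  proof (cases "j' = j")
    case True then show ?thesis using assms(2) a by auto
  next
    case False
    then have "j' < j" using a by auto
    then show ?thesis using assms(1) a unfolding pclos_def by blast
  qed
qed


lemma core_facts0:
  assumes "bfs_core n A MT IT PAR QQ r qe"
  shows "1 \<le> r" "r \<le> n" "match_inv n A MT r" "1 \<le> qe" "qe \<le> n" "QQ 1 = r"
    "\<forall>q. 1 \<le> q \<and> q \<le> qe \<longrightarrow> 1 \<le> QQ q \<and> QQ q \<le> n"
    "\<forall>q q'. 1 \<le> q \<and> q \<le> qe \<and> 1 \<le> q' \<and> q' \<le> qe \<and> QQ q = QQ q' \<longrightarrow> q = q'"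
    "\<forall>j. 1 \<le> j \<and> j \<le> n \<longrightarrow> 0 \<le> IT j \<and> IT j \<le> r"
    "\<forall>q. 2 \<le> q \<and> q \<le> qe \<longrightarrow> MT (QQ q) \<noteq> 0 \<and> IT (MT (QQ q)) = r \<and> 1 \<le> PAR (MT (QQ q)) \<and> PAR (MT (QQ q)) < q"
    "\<forall>j. 1 \<le> j \<and> j \<le> n \<and> IT j = r \<longrightarrow> 1 \<le> PAR j \<and> PAR j \<le> qe \<and> A (QQ (PAR j)) j"
  using assms unfolding bfs_core_def
  apply -
  apply (elim conjE, assumption)+
  done

lemma core_facts:
  assumes "bfs_core n A MT IT PAR QQ r qe"
  shows "1 \<le> r" "r \<le> n" "match_inv n A MT r" "1 \<le> qe" "qe \<le> n" "QQ 1 = r"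
    "\<And>q. 1 \<le> q \<Longrightarrow> q \<le> qe \<Longrightarrow> 1 \<le> QQ q \<and> QQ q \<le> n"
    "\<And>q q'. 1 \<le> q \<Longrightarrow> q \<le> qe \<Longrightarrow> 1 \<le> q' \<Longrightarrow> q' \<le> qe \<Longrightarrow> QQ q = QQ q' \<Longrightarrow> q = q'"
    "\<And>j. 1 \<le> j \<Longrightarrow> j \<le> n \<Longrightarrow> 0 \<le> IT j \<and> IT j \<le> r"
    "\<And>q. 2 \<le> q \<Longrightarrow> q \<le> qe \<Longrightarrow> MT (QQ q) \<noteq> 0 \<and> IT (MT (QQ q)) = r \<and> 1 \<le> PAR (MT (QQ q)) \<and> PAR (MT (QQ q)) < q"
    "\<And>j. 1 \<le> j \<Longrightarrow> j \<le> n \<Longrightarrow> IT j = r \<Longrightarrow> 1 \<le> PAR j \<and> PAR j \<le> qe \<and> A (QQ (PAR j)) j"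
  using core_facts0[OF assms] by blast+

lemma match_facts0:
  assumes "match_inv n A MT r"
  shows "\<forall>i. 1 \<le> i \<and> i \<le> n \<longrightarrow> 0 \<le> MT i \<and> MT i \<le> n \<and> (MT i = 0 \<longleftrightarrow> r \<le> i) \<and> (MT i \<noteq> 0 \<longrightarrow> A i (MT i))"
    "\<forall>i i'. 1 \<le> i \<and> i \<le> n \<and> 1 \<le> i' \<and> i' \<le> n \<and> MT i \<noteq> 0 \<and> MT i = MT i' \<longrightarrow> i = i'"
  using assms unfolding match_inv_def
  apply -
  apply (elim conjE, assumption)+
  done

lemma match_facts:
  assumes "match_inv n A MT r"
  shows "\<And>i. 1 \<le> i \<Longrightarrow> i \<le> n \<Longrightarrow> 0 \<le> MT i \<and> MT i \<le> n \<and> (MT i = 0 \<longleftrightarrow> r \<le> i) \<and> (MT i \<noteq> 0 \<longrightarrow> A i (MT i))"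
    "\<And>i i'. 1 \<le> i \<Longrightarrow> i \<le> n \<Longrightarrow> 1 \<le> i' \<Longrightarrow> i' \<le> n \<Longrightarrow> MT i \<noteq> 0 \<Longrightarrow> MT i = MT i' \<Longrightarrow> i = i'"
  using match_facts0[OF assms] by blast+

lemma T5:
  assumes core: "bfs_core n A MT IT PAR QQ r qe" and cv: "cov n MT IT QQ r qe 0"
    and cl: "clos n A QQ IT r p" and pc: "pclos n A (QQ p) IT r j" and pb: "parb n IT PAR r p"
    and j: "1 \<le> j" "j \<le> n" and nt: "IT j \<noteq> r" and a: "A (QQ p) j" and p: "1 \<le> p" "p \<le> qe"
  shows "bfs_core n A MT (IT(j := r)) (PAR(j := p)) QQ r qe \<and> cov n MT (IT(j := r)) QQ r qe j \<and>
    clos n A QQ (IT(j := r)) r p \<and> pclos n A (QQ p) (IT(j := r)) r (j + 1) \<and> parb n (IT(j := r)) (PAR(j := p)) r p \<and>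
    (\<forall>q. 1 \<le> q \<and> q \<le> qe \<longrightarrow> MT (QQ q) \<noteq> j)"
proof -
  note c = core_facts0[OF core]
  note c1 = c(1-8) and c2 = c(9) and c3 = c(10) and c4 = c(11)
  have ne: "MT (QQ q) \<noteq> j" if "1 \<le> q" "q \<le> qe" for q
  proof (cases "q = 1")
    case True
    then have "QQ q = r" using c1(6) by simp
    moreover have "MT r = 0" using match_facts(1)[OF c1(3), of r] c1(1,2) by auto
    ultimately show ?thesis using j by auto
  next
    case False
    then have "IT (MT (QQ q)) = r" using c3[rule_format, of q] that by auto
    then show ?thesis using nt by auto
  qed
  have n2: "\<forall>j'. 1 \<le> j' \<and> j' \<le> n \<longrightarrow> 0 \<le> (IT(j := r)) j' \<and> (IT(j := r)) j' \<le> r"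
  proof (intro allI impI)
    fix j' assume "1 \<le> j' \<and> j' \<le> n"
    then show "0 \<le> (IT(j := r)) j' \<and> (IT(j := r)) j' \<le> r" using c2[rule_format, of j'] c1(1) by auto
  qed
  have n3: "\<forall>q. 2 \<le> q \<and> q \<le> qe \<longrightarrow> MT (QQ q) \<noteq> 0 \<and> (IT(j := r)) (MT (QQ q)) = r \<and> 1 \<le> (PAR(j := p)) (MT (QQ q)) \<and> (PAR(j := p)) (MT (QQ q)) < q"
  proof (intro allI impI)
    fix q assume q: "2 \<le> q \<and> q \<le> qe"
    then have "MT (QQ q) \<noteq> j" using ne[of q] by auto
    then show "MT (QQ q) \<noteq> 0 \<and> (IT(j := r)) (MT (QQ q)) = r \<and> 1 \<le> (PAR(j := p)) (MT (QQ q)) \<and> (PAR(j := p)) (MT (QQ q)) < q"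
      using c3[rule_format, of q] q by auto
  qed
  have n4: "\<forall>j'. 1 \<le> j' \<and> j' \<le> n \<and> (IT(j := r)) j' = r \<longrightarrow> 1 \<le> (PAR(j := p)) j' \<and> (PAR(j := p)) j' \<le> qe \<and> A (QQ ((PAR(j := p)) j')) j'"
  proof (intro allI impI)
    fix j' assume a: "1 \<le> j' \<and> j' \<le> n \<and> (IT(j := r)) j' = r"
    show "1 \<le> (PAR(j := p)) j' \<and> (PAR(j := p)) j' \<le> qe \<and> A (QQ ((PAR(j := p)) j')) j'"
    proof (cases "j' = j")
      case True then show ?thesis using p \<open>A (QQ p) j\<close> by simp
    next
      case False then show ?thesis using a c4[rule_format, of j'] by simp
    qed
  qed
  show ?thesis
  proof (intro conjI)
    show "bfs_core n A MT (IT(j := r)) (PAR(j := p)) QQ r qe"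
      unfolding bfs_core_def using c1 n2 n3 n4 by (intro conjI) assumption+
    show "cov n MT (IT(j := r)) QQ r qe j" unfolding cov_def
    proof (intro allI impI)
      fix j' assume "1 \<le> j' \<and> j' \<le> n \<and> (IT(j := r)) j' = r \<and> j' \<noteq> j"
      then show "\<exists>q\<ge>2. q \<le> qe \<and> MT (QQ q) = j'" using cv[unfolded cov_def, rule_format, of j'] by auto
    qed
    show "clos n A QQ (IT(j := r)) r p" unfolding clos_def
    proof (intro allI impI)
      fix q j' assume "1 \<le> q \<and> q < p \<and> 1 \<le> j' \<and> j' \<le> n \<and> A (QQ q) j'"
      then show "(IT(j := r)) j' = r" using cl[unfolded clos_def, rule_format, of q j'] by auto
    qed
    show "pclos n A (QQ p) (IT(j := r)) r (j + 1)" unfolding pclos_def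
    proof (intro allI impI)
      fix j' assume a: "1 \<le> j' \<and> j' < j + 1 \<and> j' \<le> n \<and> A (QQ p) j'"
      show "(IT(j := r)) j' = r"
      proof (cases "j' = j")
        case False
        then have "j' < j" using a by auto
        then show ?thesis using a pc[unfolded pclos_def, rule_format, of j'] by auto
      qed auto
    qed
    show "parb n (IT(j := r)) (PAR(j := p)) r p" unfolding parb_def
    proof (intro allI impI)
      fix j' assume "1 \<le> j' \<and> j' \<le> n \<and> (IT(j := r)) j' = r"
      then show "(PAR(j := p)) j' \<le> p" using pb[unfolded parb_def, rule_format, of j'] by auto
    qed
    show "\<forall>q. 1 \<le> q \<and> q \<le> qe \<longrightarrow> MT (QQ q) \<noteq> j" using ne by blast
  qed
qed

lemma card_QQ:
  assumes "bfs_core n A MT IT PAR QQ r qe"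
  shows "card (QQ ` {1..qe}) = nat qe" "inj_on QQ {1..qe}" "QQ ` {1..qe} \<subseteq> {1..n}"
proof -
  show inj: "inj_on QQ {1..qe}" unfolding inj_on_def
  proof (intro ballI impI)
    fix x y assume "x \<in> {1..qe}" "y \<in> {1..qe}" "QQ x = QQ y"
    then show "x = y" using core_facts(8)[OF assms, of x y] by auto
  qed
  show "card (QQ ` {1..qe}) = nat qe" using card_image[OF inj] by simp
  show "QQ ` {1..qe} \<subseteq> {1..n}"
  proof
    fix y assume "y \<in> QQ ` {1..qe}"
    then obtain x where "x \<in> {1..qe}" "y = QQ x" by auto
    then show "y \<in> {1..n}" using core_facts(7)[OF assms, of x] by auto
  qed
qed

lemma T8:
  fixes M :: "int \<Rightarrow> int" and k n j :: int
  assumes "\<forall>k'. 1 \<le> k' \<and> k' < k \<longrightarrow> M k' \<noteq> j" "n < k"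
  shows "\<forall>i. 1 \<le> i \<and> i \<le> n \<longrightarrow> M i \<noteq> j"
proof (intro allI impI)
  fix i assume "1 \<le> i \<and> i \<le> n"
  then have "i < k" using assms(2) by auto
  then show "M i \<noteq> j" using assms(1)[rule_format, of i] \<open>1 \<le> i \<and> i \<le> n\<close> by auto
qed

lemma T11:
  assumes "match_inv n A MT (n + 1)"
  shows "PM n A"
proof -
  note mf = match_facts[OF assms]
  have "\<forall>i. 1 \<le> i \<and> i \<le> n \<longrightarrow> 1 \<le> MT i \<and> MT i \<le> n \<and> A i (MT i)"
  proof (intro allI impI)
    fix i assume i: "1 \<le> i \<and> i \<le> n"
    then have "0 \<le> MT i" "MT i \<le> n" "MT i \<noteq> 0" "A i (MT i)" using mf(1)[of i] by auto
    then show "1 \<le> MT i \<and> MT i \<le> n \<and> A i (MT i)" by auto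
  qed
  moreover have "inj_on MT {1..n}" unfolding inj_on_def
  proof (intro ballI impI)
    fix x y assume "x \<in> {1..n}" "y \<in> {1..n}" "MT x = MT y"
    then show "x = y" using mf(1)[of x] mf(2)[of x y] by auto
  qed
  ultimately show ?thesis unfolding PM_def by blast
qed

lemma T7:
  assumes core: "bfs_core n A MT IT PAR QQ r qe" and cvj: "cov n MT IT QQ r qe j"
    and cl: "clos n A QQ IT r p" and pc: "pclos n A (QQ p) IT r (j + 1)" and pb: "parb n IT PAR r p"
    and j: "1 \<le> j" "j \<le> n" and ITj: "IT j = r" and PARj: "PAR j = p"
    and nq: "\<forall>q. 1 \<le> q \<and> q \<le> qe \<longrightarrow> MT (QQ q) \<noteq> j"
    and k: "1 \<le> k" "k \<le> n" and MTk: "MT k = j" and p: "1 \<le> p" "p \<le> qe"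
  shows "bfs_core n A MT IT PAR (QQ(qe + 1 := k)) r (qe + 1) \<and> cov n MT IT (QQ(qe + 1 := k)) r (qe + 1) 0 \<and>
    clos n A (QQ(qe + 1 := k)) IT r p \<and> pclos n A ((QQ(qe + 1 := k)) p) IT r (j + 1) \<and> parb n IT PAR r p \<and>
    p \<le> qe + 1 \<and> (QQ(qe + 1 := k)) p = QQ p"
proof -
  note c = core_facts0[OF core]
  note cf = core_facts[OF core]
  have knot: "k \<notin> QQ ` {1..qe}"
  proof
    assume "k \<in> QQ ` {1..qe}"
    then obtain q where "q \<in> {1..qe}" "k = QQ q" by auto
    then show False using nq[rule_format, of q] MTk by auto
  qed
  have "QQ ` {1..qe} \<subseteq> {1..n} - {k}" using card_QQ(3)[OF core] knot by auto
  then have "card (QQ ` {1..qe}) \<le> card ({1..n} - {k})" by (intro card_mono) auto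
  then have "nat qe \<le> nat n - 1" using card_QQ(1)[OF core] k by simp
  then have qen: "qe + 1 \<le> n" using cf(4) k by linarith
  let ?Q = "QQ(qe + 1 := k)"
  have b1: "\<forall>q. 1 \<le> q \<and> q \<le> qe + 1 \<longrightarrow> 1 \<le> ?Q q \<and> ?Q q \<le> n"
  proof (intro allI impI)
    fix q assume q: "1 \<le> q \<and> q \<le> qe + 1"
    show "1 \<le> ?Q q \<and> ?Q q \<le> n"
    proof (cases "q = qe + 1")
      case False then show ?thesis using q cf(7)[of q] by auto
    qed (use k in auto)
  qed
  have b2: "\<forall>q q'. 1 \<le> q \<and> q \<le> qe + 1 \<and> 1 \<le> q' \<and> q' \<le> qe + 1 \<and> ?Q q = ?Q q' \<longrightarrow> q = q'"
  proof (intro allI impI)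
    fix q q' assume a: "1 \<le> q \<and> q \<le> qe + 1 \<and> 1 \<le> q' \<and> q' \<le> qe + 1 \<and> ?Q q = ?Q q'"
    show "q = q'"
    proof (cases "q = qe + 1"; cases "q' = qe + 1")
      assume "q \<noteq> qe + 1" "q' \<noteq> qe + 1" then show ?thesis using a cf(8)[of q q'] by auto
    next
      assume h: "q = qe + 1" "q' \<noteq> qe + 1"
      then have "q' \<in> {1..qe}" using a by auto
      then show ?thesis using a h knot by auto
    next
      assume h: "q \<noteq> qe + 1" "q' = qe + 1"
      then have "q \<in> {1..qe}" using a by auto
      then show ?thesis using a h knot by auto
    qed auto
  qed
  have b3: "\<forall>q. 2 \<le> q \<and> q \<le> qe + 1 \<longrightarrow> MT (?Q q) \<noteq> 0 \<and> IT (MT (?Q q)) = r \<and> 1 \<le> PAR (MT (?Q q)) \<and> PAR (MT (?Q q)) < q"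
  proof (intro allI impI)
    fix q assume q: "2 \<le> q \<and> q \<le> qe + 1"
    show "MT (?Q q) \<noteq> 0 \<and> IT (MT (?Q q)) = r \<and> 1 \<le> PAR (MT (?Q q)) \<and> PAR (MT (?Q q)) < q"
    proof (cases "q = qe + 1")
      case True then show ?thesis using MTk ITj PARj j p by auto
    next
      case False then show ?thesis using q cf(10)[of q] by auto
    qed
  qed
  have b4: "\<forall>j. 1 \<le> j \<and> j \<le> n \<and> IT j = r \<longrightarrow> 1 \<le> PAR j \<and> PAR j \<le> qe + 1 \<and> A (?Q (PAR j)) j"
  proof (intro allI impI)
    fix j' assume a: "1 \<le> j' \<and> j' \<le> n \<and> IT j' = r"
    then have "1 \<le> PAR j' \<and> PAR j' \<le> qe \<and> A (QQ (PAR j')) j'" using cf(11)[of j'] by auto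
    then show "1 \<le> PAR j' \<and> PAR j' \<le> qe + 1 \<and> A (?Q (PAR j')) j'" by auto
  qed
  have b0: "?Q 1 = r" using cf(4,6) by auto
  have qe1: "1 \<le> qe + 1" using cf(4) by auto
  show ?thesis
  proof (intro conjI)
    show "bfs_core n A MT IT PAR ?Q r (qe + 1)"
      unfolding bfs_core_def using c(1-3) qe1 qen b0 b1 b2 c(9) b3 b4 by (intro conjI) assumption+
    show "cov n MT IT ?Q r (qe + 1) 0"
      unfolding cov_def
    proof (intro allI impI)
      fix j' assume a: "1 \<le> j' \<and> j' \<le> n \<and> IT j' = r \<and> j' \<noteq> 0"
      show "\<exists>q\<ge>2. q \<le> qe + 1 \<and> MT (?Q q) = j'"
      proof (cases "j' = j")
        case True then show ?thesis using MTk cf(4) by (intro exI[of _ "qe + 1"]) auto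
      next
        case False
        then obtain q where "2 \<le> q" "q \<le> qe" "MT (QQ q) = j'" using cvj[unfolded cov_def, rule_format, of j'] a by blast
        then show ?thesis by (intro exI[of _ q]) auto
      qed
    qed
    show "clos n A ?Q IT r p" unfolding clos_def
    proof (intro allI impI)
      fix q j' assume a: "1 \<le> q \<and> q < p \<and> 1 \<le> j' \<and> j' \<le> n \<and> A (?Q q) j'"
      then have "?Q q = QQ q" using p by auto
      then show "IT j' = r" using a cl[unfolded clos_def, rule_format, of q j'] by auto
    qed
    show "pclos n A (?Q p) IT r (j + 1)" using pc p by auto
    show "parb n IT PAR r p" using pb .
    show "p \<le> qe + 1" using p by auto
    show "?Q p = QQ p" using p by auto
  qed
qed

lemma T9:
  assumes core0: "bfs_core n A MT0 IT PAR QQ r qe" and mi: "match_inv n A MT r"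
    and j: "1 \<le> j" "j \<le> n" and ITj: "IT j = r" and free: "\<forall>i. 1 \<le> i \<and> i \<le> n \<longrightarrow> MT i \<noteq> j"
    and agree: "\<forall>q. 1 \<le> q \<and> q \<le> PAR j \<longrightarrow> MT (QQ q) = MT0 (QQ q)" and b: "PAR j \<noteq> 1"
  shows "match_inv n A (MT(QQ (PAR j) := j)) r \<and> 1 \<le> MT (QQ (PAR j)) \<and> MT (QQ (PAR j)) \<le> n \<and>
     IT (MT (QQ (PAR j))) = r \<and>
     (\<forall>x. 1 \<le> x \<and> x \<le> n \<longrightarrow> (MT(QQ (PAR j) := j)) x \<noteq> MT (QQ (PAR j))) \<and>
     (\<forall>q. 1 \<le> q \<and> q \<le> PAR (MT (QQ (PAR j))) \<longrightarrow> (MT(QQ (PAR j) := j)) (QQ q) = MT0 (QQ q)) \<and>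
     1 \<le> PAR (MT (QQ (PAR j))) \<and> PAR (MT (QQ (PAR j))) < PAR j"
proof -
  note cf = core_facts[OF core0]
  note mf = match_facts[OF mi]
  define bb where "bb = PAR j"
  define i where "i = QQ bb"
  define j2 where "j2 = MT i"
  have bb: "1 \<le> bb" "bb \<le> qe" "A i j" using cf(11)[OF j ITj] unfolding bb_def i_def by auto
  have bb2: "2 \<le> bb" using bb b unfolding bb_def by auto
  have i: "1 \<le> i" "i \<le> n" using cf(7)[of bb] bb unfolding i_def by auto
  have MT0i: "MT i = MT0 i" using agree[rule_format, of bb] bb unfolding i_def bb_def by auto
  have c3: "MT0 i \<noteq> 0" "IT (MT0 i) = r" "1 \<le> PAR (MT0 i)" "PAR (MT0 i) < bb"
    using cf(10)[OF bb2 bb(2)] unfolding i_def by auto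
  have j2: "j2 \<noteq> 0" "1 \<le> j2" "j2 \<le> n" "\<not> r \<le> i" using mf(1)[OF i] c3 MT0i unfolding j2_def by auto
  have jj2: "j \<noteq> j2" using free[rule_format, of i] i unfolding j2_def by auto
  have m1: "match_inv n A (MT(i := j)) r"
    unfolding match_inv_def
  proof (rule conjI; intro allI impI)
    fix x assume x: "1 \<le> x \<and> x \<le> n"
    show "0 \<le> (MT(i := j)) x \<and> (MT(i := j)) x \<le> n \<and> ((MT(i := j)) x = 0 \<longleftrightarrow> r \<le> x) \<and> ((MT(i := j)) x \<noteq> 0 \<longrightarrow> A x ((MT(i := j)) x))"
    proof (cases "x = i")
      case True then show ?thesis using j j2(4) bb(3) by auto
    next
      case False then show ?thesis using mf(1)[of x] x by auto
    qed
  next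
    fix x x' assume a: "1 \<le> x \<and> x \<le> n \<and> 1 \<le> x' \<and> x' \<le> n \<and> (MT(i := j)) x \<noteq> 0 \<and> (MT(i := j)) x = (MT(i := j)) x'"
    show "x = x'"
    proof (cases "x = i"; cases "x' = i")
      assume "x \<noteq> i" "x' \<noteq> i" then show ?thesis using a mf(2)[of x x'] by auto
    next
      assume "x = i" "x' \<noteq> i" then show ?thesis using a free[rule_format, of x'] by auto
    next
      assume "x \<noteq> i" "x' = i" then show ?thesis using a free[rule_format, of x] by auto
    qed auto
  qed
  have m2: "\<forall>x. 1 \<le> x \<and> x \<le> n \<longrightarrow> (MT(i := j)) x \<noteq> j2"
  proof (intro allI impI)
    fix x assume x: "1 \<le> x \<and> x \<le> n"
    show "(MT(i := j)) x \<noteq> j2"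
    proof (cases "x = i")
      case True then show ?thesis using jj2 by auto
    next
      case False then show ?thesis using mf(2)[of x i] x i j2 unfolding j2_def by auto
    qed
  qed
  have m3: "\<forall>q. 1 \<le> q \<and> q \<le> PAR j2 \<longrightarrow> (MT(i := j)) (QQ q) = MT0 (QQ q)"
  proof (intro allI impI)
    fix q assume q: "1 \<le> q \<and> q \<le> PAR j2"
    then have qb: "q < bb" using c3 MT0i unfolding j2_def by auto
    then have "QQ q \<noteq> i" using cf(8)[of q bb] q bb unfolding i_def by auto
    then show "(MT(i := j)) (QQ q) = MT0 (QQ q)" using agree[rule_format, of q] q qb unfolding bb_def by auto
  qed
  show ?thesis using m1 m2 m3 j2 c3 MT0i unfolding i_def j2_def bb_def by auto
qed

lemma T10:
  assumes core0: "bfs_core n A MT0 IT PAR QQ r qe" and mi: "match_inv n A MT r"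
    and j: "1 \<le> j" "j \<le> n" and ITj: "IT j = r" and free: "\<forall>i. 1 \<le> i \<and> i \<le> n \<longrightarrow> MT i \<noteq> j"
    and b: "PAR j = 1"
  shows "match_inv n A (MT(QQ (PAR j) := j)) (r + 1) \<and> 1 \<le> QQ (PAR j) \<and> r + 1 \<le> n + 1 \<and> 1 \<le> r + 1 \<and>
    (\<forall>j. 1 \<le> j \<and> j \<le> n \<longrightarrow> 0 \<le> IT j \<and> IT j < r + 1)"
proof -
  note cf = core_facts[OF core0]
  note mf = match_facts[OF mi]
  have q: "QQ (PAR j) = r" using b cf(6) by simp
  have a: "A r j" using cf(11)[OF j ITj] b cf(6) by simp
  have m1: "match_inv n A (MT(r := j)) (r + 1)"
    unfolding match_inv_def
  proof (rule conjI; intro allI impI)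
    fix x assume x: "1 \<le> x \<and> x \<le> n"
    show "0 \<le> (MT(r := j)) x \<and> (MT(r := j)) x \<le> n \<and> ((MT(r := j)) x = 0 \<longleftrightarrow> r + 1 \<le> x) \<and> ((MT(r := j)) x \<noteq> 0 \<longrightarrow> A x ((MT(r := j)) x))"
    proof (cases "x = r")
      case True then show ?thesis using j a by auto
    next
      case False then show ?thesis using mf(1)[of x] x by auto
    qed
  next
    fix x x' assume a: "1 \<le> x \<and> x \<le> n \<and> 1 \<le> x' \<and> x' \<le> n \<and> (MT(r := j)) x \<noteq> 0 \<and> (MT(r := j)) x = (MT(r := j)) x'"
    show "x = x'"
    proof (cases "x = r"; cases "x' = r")
      assume "x \<noteq> r" "x' \<noteq> r" then show ?thesis using a mf(2)[of x x'] by auto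
    next
      assume "x = r" "x' \<noteq> r" then show ?thesis using a free[rule_format, of x'] by auto
    next
      assume "x \<noteq> r" "x' = r" then show ?thesis using a free[rule_format, of x] by auto
    qed auto
  qed
  have it: "\<forall>j. 1 \<le> j \<and> j \<le> n \<longrightarrow> 0 \<le> IT j \<and> IT j < r + 1"
  proof (intro allI impI)
    fix j' assume "1 \<le> j' \<and> j' \<le> n" then show "0 \<le> IT j' \<and> IT j' < r + 1" using cf(9)[of j'] by auto
  qed
  show ?thesis using m1 q cf(1,2) it by auto
qed

lemma Hall:
  assumes core: "bfs_core n A MT IT PAR QQ r qe" and cv: "cov n MT IT QQ r qe 0"
    and cl: "clos n A QQ IT r (qe + 1)"
  shows "\<not> PM n A"
proof
  assume "PM n A"
  then obtain g where g: "\<forall>i. 1 \<le> i \<and> i \<le> n \<longrightarrow> 1 \<le> g i \<and> g i \<le> n \<and> A i (g i)" "inj_on g {1..n}"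
    unfolding PM_def by blast
  note cf = core_facts[OF core]
  let ?S = "QQ ` {1..qe}"
  let ?T = "{j. 1 \<le> j \<and> j \<le> n \<and> IT j = r}"
  have S: "?S \<subseteq> {1..n}" "card ?S = nat qe" using card_QQ[OF core] by auto
  have "g ` ?S \<subseteq> ?T"
  proof
    fix y assume "y \<in> g ` ?S"
    then obtain q where q: "1 \<le> q" "q \<le> qe" "y = g (QQ q)" by auto
    have "1 \<le> QQ q" "QQ q \<le> n" using cf(7)[of q] q by auto
    then have "1 \<le> y" "y \<le> n" "A (QQ q) y" using g(1)[rule_format, of "QQ q"] q by auto
    then show "y \<in> ?T" using cl[unfolded clos_def, rule_format, of q y] q by auto
  qed
  moreover have "?T \<subseteq> MT ` QQ ` {2..qe}"
  proof
    fix y assume "y \<in> ?T"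
    then obtain q where "2 \<le> q" "q \<le> qe" "MT (QQ q) = y" using cv[unfolded cov_def, rule_format, of y] by auto
    then show "y \<in> MT ` QQ ` {2..qe}" by auto
  qed
  ultimately have "g ` ?S \<subseteq> MT ` QQ ` {2..qe}" by blast
  then have "card (g ` ?S) \<le> card (MT ` QQ ` {2..qe})" by (intro card_mono) auto
  also have "\<dots> \<le> card {2..qe}" by (metis card_image_le finite_atLeastAtMost_int finite_imageI image_image)
  finally have "card (g ` ?S) \<le> nat (qe - 1)" by simp
  moreover have "card (g ` ?S) = card ?S"
    using g(2) S(1) by (intro card_image) (auto intro: inj_on_subset)
  ultimately show False using S(2) cf(4) by simp
qed


lemma reach_atS: "reach P s T (atS A Q) \<Longrightarrow> (\<And>s. fst s \<in> A \<Longrightarrow> Q s \<Longrightarrow> R s) \<Longrightarrow> reach P s T R"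
  by (erule reach_mono) (auto simp: atS_def)

lemma vw_eq: "vw m = (a, b, c, d, e, f, g, h, i, j) \<longleftrightarrow>
  arr 0 m = a \<and> arr 1 m = b \<and> arr 2 m = c \<and> arr 3 m = d \<and> m (-1) = e \<and> m (-2) = f \<and> m (-3) = g \<and> m (-4) = h \<and> m (-5) = i \<and> m (-6) = j"
  by (simp add: vw_def)

locale mach =
  fixes m0 :: "int \<Rightarrow> int" and n :: int
  assumes m00: "m0 0 = n" and npos: "0 \<le> n" and mneg: "\<forall>a<0. m0 a = 0"
begin

abbreviation "A \<equiv> adjm m0 n"

definition L :: nat where "L = nat n"

definition OI :: "int \<Rightarrow> (int \<Rightarrow> int) \<Rightarrow> bool" where
  "OI r m \<longleftrightarrow> G m0 m \<and> m (-1) = r \<and> 1 \<le> r \<and> r \<le> n + 1 \<and> match_inv n A (arr 0 m) r \<and>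
     (\<forall>j. 1 \<le> j \<and> j \<le> n \<longrightarrow> 0 \<le> arr 1 m j \<and> arr 1 m j < r)"

definition BI :: "int \<Rightarrow> int \<Rightarrow> (int \<Rightarrow> int) \<Rightarrow> bool" where
  "BI r p m \<longleftrightarrow> G m0 m \<and> m (-1) = r \<and> m (-2) = p \<and>
     bfs_core n A (arr 0 m) (arr 1 m) (arr 2 m) (arr 3 m) r (m (-3)) \<and>
     cov n (arr 0 m) (arr 1 m) (arr 3 m) r (m (-3)) 0 \<and> 1 \<le> p \<and> p \<le> m (-3) + 1 \<and>
     clos n A (arr 3 m) (arr 1 m) r p \<and> parb n (arr 1 m) (arr 2 m) r (p - 1)"

definition JI :: "int \<Rightarrow> int \<Rightarrow> (int \<Rightarrow> int) \<Rightarrow> bool" where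
  "JI r p m \<longleftrightarrow> G m0 m \<and> m (-1) = r \<and> m (-2) = p \<and>
     bfs_core n A (arr 0 m) (arr 1 m) (arr 2 m) (arr 3 m) r (m (-3)) \<and>
     cov n (arr 0 m) (arr 1 m) (arr 3 m) r (m (-3)) 0 \<and> 1 \<le> p \<and> p \<le> m (-3) \<and>
     m (-4) = arr 3 m p \<and> 1 \<le> m (-5) \<and> m (-5) \<le> n + 1 \<and>
     clos n A (arr 3 m) (arr 1 m) r p \<and> pclos n A (m (-4)) (arr 1 m) r (m (-5)) \<and> parb n (arr 1 m) (arr 2 m) r p"

definition KI :: "int \<Rightarrow> int \<Rightarrow> int \<Rightarrow> (int \<Rightarrow> int) \<Rightarrow> bool" where
  "KI r p j m \<longleftrightarrow> G m0 m \<and> m (-1) = r \<and> m (-2) = p \<and> m (-5) = j \<and> 1 \<le> j \<and> j \<le> n \<and>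
     bfs_core n A (arr 0 m) (arr 1 m) (arr 2 m) (arr 3 m) r (m (-3)) \<and>
     cov n (arr 0 m) (arr 1 m) (arr 3 m) r (m (-3)) j \<and> 1 \<le> p \<and> p \<le> m (-3) \<and>
     m (-4) = arr 3 m p \<and> clos n A (arr 3 m) (arr 1 m) r p \<and> pclos n A (m (-4)) (arr 1 m) r (j + 1) \<and>
     parb n (arr 1 m) (arr 2 m) r p \<and> arr 1 m j = r \<and> arr 2 m j = p \<and>
     (\<forall>q. 1 \<le> q \<and> q \<le> m (-3) \<longrightarrow> arr 0 m (arr 3 m q) \<noteq> j) \<and>
     1 \<le> m (-6) \<and> m (-6) \<le> n + 1 \<and> (\<forall>k'. 1 \<le> k' \<and> k' < m (-6) \<longrightarrow> arr 0 m k' \<noteq> j)"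

definition AI :: "int \<Rightarrow> (int \<Rightarrow> int) \<Rightarrow> int \<Rightarrow> (int \<Rightarrow> int) \<Rightarrow> bool" where
  "AI r MT0 qe m \<longleftrightarrow> G m0 m \<and> m (-1) = r \<and> bfs_core n A MT0 (arr 1 m) (arr 2 m) (arr 3 m) r qe \<and>
     match_inv n A (arr 0 m) r \<and> 1 \<le> m (-5) \<and> m (-5) \<le> n \<and> arr 1 m (m (-5)) = r \<and>
     (\<forall>i. 1 \<le> i \<and> i \<le> n \<longrightarrow> arr 0 m i \<noteq> m (-5)) \<and>
     (\<forall>q. 1 \<le> q \<and> q \<le> arr 2 m (m (-5)) \<longrightarrow> arr 0 m (arr 3 m q) = MT0 (arr 3 m q))"

definition GOOD :: "ram_state \<Rightarrow> bool" where
  "GOOD s \<longleftrightarrow> halted prog s \<and> (0 < snd s 0 \<longleftrightarrow> PM n A)"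

lemma AI_D:
  assumes "AI r MT0 qe m"
  shows "G m0 m" "m (-1) = r" "bfs_core n A MT0 (arr 1 m) (arr 2 m) (arr 3 m) r qe"
     "match_inv n A (arr 0 m) r" "1 \<le> m (-5)" "m (-5) \<le> n" "arr 1 m (m (-5)) = r"
     "\<forall>i. 1 \<le> i \<and> i \<le> n \<longrightarrow> arr 0 m i \<noteq> m (-5)"
     "\<forall>q. 1 \<le> q \<and> q \<le> arr 2 m (m (-5)) \<longrightarrow> arr 0 m (arr 3 m q) = MT0 (arr 3 m q)"
  using assms unfolding AI_def
  apply -
  apply (elim conjE, assumption)+
  done

lemma aug_iter:
  assumes ai: "AI r MT0 qe m"
  shows "reach prog (79, m) 30 (\<lambda>s. (fst s = 1 \<and> OI (r + 1) (snd s)) \<or>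
     (fst s = 79 \<and> AI r MT0 qe (snd s) \<and> nat (arr 2 (snd s) (snd s (-5))) < nat (arr 2 m (m (-5)))))"
proof -
  note d = AI_D[OF ai]
  note cf = core_facts[OF d(3)]
  define j where "j = m (-5)"
  have j: "1 \<le> j" "j \<le> n" using d(5,6) unfolding j_def by auto
  have pj: "1 \<le> arr 2 m j" "arr 2 m j \<le> qe" using cf(11)[OF j d(7)[folded j_def]] by auto
  have qj: "1 \<le> arr 3 m (arr 2 m j)" using cf(7)[OF pj] by auto
  note r = blk_aug[OF d(1) m00 refl refl refl refl refl refl refl refl refl refl j(1)[unfolded j_def] pj(1)[unfolded j_def] qj[unfolded j_def]]
  show ?thesis
    apply (rule reach_atS[OF r])
    subgoal premises prems for s
    proof -
      have "fst s = 1 \<or> fst s = 79" using prems(1) by auto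
      then show ?thesis
      proof
        assume s1: "fst s = 1"
        then have h: "arr 2 m j = 1" "G m0 (snd s)"
          "vw (snd s) = ((arr 0 m)(arr 3 m (arr 2 m j) := j), arr 1 m, arr 2 m, arr 3 m, m (-1) + 1, arr 2 m j, m (-3), arr 3 m (arr 2 m j), j, m (-6))"
          using prems(2) unfolding j_def by auto
        note t = T10[OF d(3) d(4) j d(7)[folded j_def] d(8)[folded j_def] h(1)]
        show ?thesis using s1 h t d(2) unfolding OI_def vw_eq by auto
      next
        assume s1: "fst s = 79"
        then have h: "arr 2 m j \<noteq> 1" "G m0 (snd s)"
          "vw (snd s) = ((arr 0 m)(arr 3 m (arr 2 m j) := j), arr 1 m, arr 2 m, arr 3 m, m (-1), arr 2 m j, m (-3), arr 3 m (arr 2 m j), arr 0 m (arr 3 m (arr 2 m j)), m (-6))"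
          using prems(2) unfolding j_def by auto
        note t = T9[OF d(3) d(4) j d(7)[folded j_def] d(8)[folded j_def] d(9)[folded j_def] h(1)]
        have "AI r MT0 qe (snd s)" using h t d(2) d(3) unfolding AI_def vw_eq by auto
        moreover have "nat (arr 2 (snd s) (snd s (-5))) < nat (arr 2 m (m (-5)))"
          using h t unfolding vw_eq j_def by auto
        ultimately show ?thesis using s1 by auto
      qed
    qed
    done
qed


lemma aug_loop:
  assumes ai: "AI r MT0 qe m"
  shows "reach prog (79, m) ((L + 1) * 30) (\<lambda>s. fst s = 1 \<and> OI (r + 1) (snd s))"
proof -
  let ?I = "\<lambda>s::ram_state. fst s = 79 \<and> AI r MT0 qe (snd s)"
  let ?mu = "\<lambda>s::ram_state. nat (arr 2 (snd s) (snd s (-5)))"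
  have "reach prog (79, m) ((?mu (79, m) + 1) * 30) (\<lambda>s. fst s = 1 \<and> OI (r + 1) (snd s))"
  proof (rule reach_loop[where I = ?I])
    fix s assume I: "?I s"
    obtain pc mm where s: "s = (pc, mm)" by (cases s)
    have "pc = 79" "AI r MT0 qe mm" using I s by auto
    then show "reach prog s 30 (\<lambda>s'. (fst s' = 1 \<and> OI (r + 1) (snd s')) \<or> (?I s' \<and> ?mu s' < ?mu s))"
      using aug_iter[of r MT0 qe mm] s by simp
  next
    show "?I (79, m)" using ai by simp
  qed
  moreover have "?mu (79, m) \<le> L"
  proof -
    note d = AI_D[OF ai]
    note cf = core_facts[OF d(3)]
    have "arr 2 m (m (-5)) \<le> qe" using cf(11)[OF d(5) d(6) d(7)] by auto
    then show ?thesis using cf(5) unfolding L_def by auto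
  qed
  ultimately show ?thesis
    by (elim reach_mono) (simp_all add: mult_right_mono)
qed

lemma KI_D:
  assumes "KI r p j m"
  shows "G m0 m" "m (-1) = r" "m (-2) = p" "m (-5) = j" "1 \<le> j" "j \<le> n"
     "bfs_core n A (arr 0 m) (arr 1 m) (arr 2 m) (arr 3 m) r (m (-3))"
     "cov n (arr 0 m) (arr 1 m) (arr 3 m) r (m (-3)) j" "1 \<le> p" "p \<le> m (-3)"
     "m (-4) = arr 3 m p" "clos n A (arr 3 m) (arr 1 m) r p" "pclos n A (m (-4)) (arr 1 m) r (j + 1)"
     "parb n (arr 1 m) (arr 2 m) r p" "arr 1 m j = r" "arr 2 m j = p"
     "\<forall>q. 1 \<le> q \<and> q \<le> m (-3) \<longrightarrow> arr 0 m (arr 3 m q) \<noteq> j"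
     "1 \<le> m (-6)" "m (-6) \<le> n + 1" "\<forall>k'. 1 \<le> k' \<and> k' < m (-6) \<longrightarrow> arr 0 m k' \<noteq> j"
  using assms unfolding KI_def
  apply -
  apply (elim conjE, assumption)+
  done

lemma JI_D:
  assumes "JI r p m"
  shows "G m0 m" "m (-1) = r" "m (-2) = p"
     "bfs_core n A (arr 0 m) (arr 1 m) (arr 2 m) (arr 3 m) r (m (-3))"
     "cov n (arr 0 m) (arr 1 m) (arr 3 m) r (m (-3)) 0" "1 \<le> p" "p \<le> m (-3)"
     "m (-4) = arr 3 m p" "1 \<le> m (-5)" "m (-5) \<le> n + 1"
     "clos n A (arr 3 m) (arr 1 m) r p" "pclos n A (m (-4)) (arr 1 m) r (m (-5))" "parb n (arr 1 m) (arr 2 m) r p"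
  using assms unfolding JI_def
  apply -
  apply (elim conjE, assumption)+
  done

lemma BI_D:
  assumes "BI r p m"
  shows "G m0 m" "m (-1) = r" "m (-2) = p"
     "bfs_core n A (arr 0 m) (arr 1 m) (arr 2 m) (arr 3 m) r (m (-3))"
     "cov n (arr 0 m) (arr 1 m) (arr 3 m) r (m (-3)) 0" "1 \<le> p" "p \<le> m (-3) + 1"
     "clos n A (arr 3 m) (arr 1 m) r p" "parb n (arr 1 m) (arr 2 m) r (p - 1)"
  using assms unfolding BI_def
  apply -
  apply (elim conjE, assumption)+
  done

lemma OI_D:
  assumes "OI r m"
  shows "G m0 m" "m (-1) = r" "1 \<le> r" "r \<le> n + 1" "match_inv n A (arr 0 m) r"
     "\<forall>j. 1 \<le> j \<and> j \<le> n \<longrightarrow> 0 \<le> arr 1 m j \<and> arr 1 m j < r"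
  using assms unfolding OI_def
  apply -
  apply (elim conjE, assumption)+
  done

definition "Bk = 25 + (L + 1) * 30"

lemma k_iter:
  assumes ki: "KI r p j m"
  shows "reach prog (51, m) Bk (\<lambda>s. (fst s = 1 \<and> OI (r + 1) (snd s)) \<or>
     (fst s = 15 \<and> JI r p (snd s) \<and> snd s (-5) = j + 1) \<or>
     (fst s = 51 \<and> KI r p j (snd s) \<and> nat (n + 1 - snd s (-6)) < nat (n + 1 - m (-6))))"
proof -
  note d = KI_D[OF ki]
  note cf = core_facts[OF d(7)]
  have qe0: "0 \<le> m (-3)" using cf(4) by auto
  note r = blk_k[OF d(1) m00 refl refl refl refl refl refl refl refl refl refl d(18) qe0]
  show ?thesis unfolding Bk_def
  proof (rule reach_trans[OF r])
    fix s :: ram_state assume h0: "atS {79, 15, 51} (\<lambda>s.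
      (fst s = 79 \<longrightarrow> n < m (-6) \<and> G m0 (snd s) \<and> vw (snd s) = (arr 0 m, arr 1 m, arr 2 m, arr 3 m, m (-1), m (-2), m (-3), m (-4), m (-5), m (-6))) \<and>
      (fst s = 15 \<longrightarrow> m (-6) \<le> n \<and> arr 0 m (m (-6)) = m (-5) \<and> G m0 (snd s) \<and> vw (snd s) = (arr 0 m, arr 1 m, arr 2 m, (arr 3 m)(m (-3) + 1 := m (-6)), m (-1), m (-2), m (-3) + 1, m (-4), m (-5) + 1, m (-6))) \<and>
      (fst s = 51 \<longrightarrow> m (-6) \<le> n \<and> arr 0 m (m (-6)) \<noteq> m (-5) \<and> G m0 (snd s) \<and> vw (snd s) = (arr 0 m, arr 1 m, arr 2 m, arr 3 m, m (-1), m (-2), m (-3), m (-4), m (-5), m (-6) + 1))) s"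
    have "fst s = 79 \<or> fst s = 15 \<or> fst s = 51" using h0 unfolding atS_def by simp
    then show "reach prog s ((L + 1) * 30) (\<lambda>s. (fst s = 1 \<and> OI (r + 1) (snd s)) \<or>
     (fst s = 15 \<and> JI r p (snd s) \<and> snd s (-5) = j + 1) \<or>
     (fst s = 51 \<and> KI r p j (snd s) \<and> nat (n + 1 - snd s (-6)) < nat (n + 1 - m (-6))))"
    proof (elim disjE)
      assume s1: "fst s = 79"
      then have h: "n < m (-6)" "G m0 (snd s)" "vw (snd s) = vw m" using h0 unfolding atS_def vw_def by simp_all
      have free: "\<forall>i. 1 \<le> i \<and> i \<le> n \<longrightarrow> arr 0 m i \<noteq> j" using T8[OF d(20) h(1)] .
      have e: "arr 0 (snd s) = arr 0 m" "arr 1 (snd s) = arr 1 m" "arr 2 (snd s) = arr 2 m" "arr 3 (snd s) = arr 3 m"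
        "snd s (-1) = r" "snd s (-3) = m (-3)" "snd s (-5) = j"
        using h(3) d(2,4) unfolding vw_def by auto
      have "AI r (arr 0 m) (m (-3)) (snd s)"
        unfolding AI_def e using h(2) d(5,6,7,15) free cf(3) by auto
      then have "reach prog (79, snd s) ((L + 1) * 30) (\<lambda>s. fst s = 1 \<and> OI (r + 1) (snd s))"
        by (rule aug_loop)
      then have "reach prog (79, snd s) ((L + 1) * 30) (\<lambda>s. (fst s = 1 \<and> OI (r + 1) (snd s)) \<or>
         (fst s = 15 \<and> JI r p (snd s) \<and> snd s (-5) = j + 1) \<or>
         (fst s = 51 \<and> KI r p j (snd s) \<and> nat (n + 1 - snd s (-6)) < nat (n + 1 - m (-6))))"
        by (rule reach_mono) auto
      moreover have "s = (79, snd s)" using s1 by (cases s) auto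
      ultimately show ?thesis by simp
    next
      assume s1: "fst s = 15"
      then have h: "m (-6) \<le> n" "arr 0 m (m (-6)) = j" "G m0 (snd s)"
        "vw (snd s) = (arr 0 m, arr 1 m, arr 2 m, (arr 3 m)(m (-3) + 1 := m (-6)), m (-1), m (-2), m (-3) + 1, m (-4), m (-5) + 1, m (-6))"
        using h0 d(4) unfolding atS_def by simp_all
      note t = T7[OF d(7) d(8) d(12) d(13)[unfolded d(11)] d(14) d(5) d(6) d(15) d(16) d(17) d(18) h(1) h(2) d(9) d(10)]
      have "JI r p (snd s)" using h t d(1-6) d(9-11) unfolding JI_def vw_eq by auto
      moreover have "snd s (-5) = j + 1" using h d(4) unfolding vw_eq by auto
      ultimately show ?thesis using s1 by (intro reach_done) auto
    next
      assume s1: "fst s = 51"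
      then have h: "m (-6) \<le> n" "arr 0 m (m (-6)) \<noteq> j" "G m0 (snd s)"
        "vw (snd s) = (arr 0 m, arr 1 m, arr 2 m, arr 3 m, m (-1), m (-2), m (-3), m (-4), m (-5), m (-6) + 1)"
        using h0 d(4) unfolding atS_def by simp_all
      have "\<forall>k'. 1 \<le> k' \<and> k' < m (-6) + 1 \<longrightarrow> arr 0 m k' \<noteq> j"
      proof (intro allI impI)
        fix k' assume k': "1 \<le> k' \<and> k' < m (-6) + 1"
        show "arr 0 m k' \<noteq> j"
        proof (cases "k' = m (-6)")
          case True then show ?thesis using h(2) by auto
        next
          case False then show ?thesis using k' d(20)[rule_format, of k'] by auto
        qed
      qed
      moreover have e: "arr 0 (snd s) = arr 0 m" "arr 1 (snd s) = arr 1 m" "arr 2 (snd s) = arr 2 m" "arr 3 (snd s) = arr 3 m"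
        "snd s (-1) = r" "snd s (-2) = p" "snd s (-3) = m (-3)" "snd s (-4) = m (-4)" "snd s (-5) = j" "snd s (-6) = m (-6) + 1"
        using h(4) d(2,3,4) unfolding vw_eq by auto
      ultimately have "KI r p j (snd s)" unfolding KI_def e using h(1,3) d(5-17) d(18) by auto
      moreover have "nat (n + 1 - snd s (-6)) < nat (n + 1 - m (-6))" using h unfolding vw_eq by auto
      ultimately show ?thesis using s1 by (intro reach_done) auto
    qed
  qed
qed


lemma k_loop:
  assumes ki: "KI r p j m"
  shows "reach prog (51, m) ((L + 1) * Bk) (\<lambda>s. (fst s = 1 \<and> OI (r + 1) (snd s)) \<or>
     (fst s = 15 \<and> JI r p (snd s) \<and> snd s (-5) = j + 1))"
proof -
  let ?I = "\<lambda>s::ram_state. fst s = 51 \<and> KI r p j (snd s)"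
  let ?mu = "\<lambda>s::ram_state. nat (n + 1 - snd s (-6))"
  let ?Q = "\<lambda>s::ram_state. (fst s = 1 \<and> OI (r + 1) (snd s)) \<or> (fst s = 15 \<and> JI r p (snd s) \<and> snd s (-5) = j + 1)"
  have "reach prog (51, m) ((?mu (51, m) + 1) * Bk) ?Q"
  proof (rule reach_loop[where I = ?I])
    fix s assume I: "?I s"
    obtain pc mm where s: "s = (pc, mm)" by (cases s)
    have pc: "pc = 51" and km: "KI r p j mm" using I s by auto
    show "reach prog s Bk (\<lambda>s'. ?Q s' \<or> (?I s' \<and> ?mu s' < ?mu s))"
      unfolding s pc by (rule reach_mono[OF k_iter[OF km]]) auto
  next
    show "?I (51, m)" using ki by simp
  qed
  moreover have "?mu (51, m) \<le> L" using KI_D(18)[OF ki] unfolding L_def by auto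
  ultimately show ?thesis
    by (elim reach_mono) (simp_all add: mult_right_mono)
qed

definition "Bj = 40 + (L + 1) * Bk"

lemma j_iter:
  assumes ji: "JI r p m"
  shows "reach prog (15, m) Bj (\<lambda>s. (fst s = 1 \<and> OI (r + 1) (snd s)) \<or> (fst s = 7 \<and> BI r (p + 1) (snd s)) \<or>
     (fst s = 15 \<and> JI r p (snd s) \<and> nat (n + 1 - snd s (-5)) < nat (n + 1 - m (-5))))"
proof -
  note d = JI_D[OF ji]
  note cf = core_facts[OF d(4)]
  have i1: "1 \<le> m (-4)" using cf(7)[OF d(6) d(7)] d(8) by auto
  note r = blk_j[OF d(1) m00 refl refl refl refl refl refl refl refl refl refl i1 d(9) npos]
  show ?thesis unfolding Bj_def
  proof (rule reach_trans[OF r])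
    fix s :: ram_state assume h0: "atS {7, 15, 51} (\<lambda>s.
     (fst s = 7 \<longrightarrow> n < m (-5) \<and> G m0 (snd s) \<and> vw (snd s) = (arr 0 m, arr 1 m, arr 2 m, arr 3 m, m (-1), m (-2) + 1, m (-3), m (-4), m (-5), m (-6))) \<and>
     (fst s = 15 \<longrightarrow> m (-5) \<le> n \<and> (arr 1 m (m (-5)) = m (-1) \<or> \<not> adjm m0 n (m (-4)) (m (-5))) \<and> G m0 (snd s) \<and> vw (snd s) = (arr 0 m, arr 1 m, arr 2 m, arr 3 m, m (-1), m (-2), m (-3), m (-4), m (-5) + 1, m (-6))) \<and>
     (fst s = 51 \<longrightarrow> m (-5) \<le> n \<and> arr 1 m (m (-5)) \<noteq> m (-1) \<and> adjm m0 n (m (-4)) (m (-5)) \<and> G m0 (snd s) \<and> vw (snd s) = (arr 0 m, (arr 1 m)(m (-5) := m (-1)), (arr 2 m)(m (-5) := m (-2)), arr 3 m, m (-1), m (-2), m (-3), m (-4), m (-5), 1))) s"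
    have "fst s = 7 \<or> fst s = 15 \<or> fst s = 51" using h0 unfolding atS_def by simp
    then show "reach prog s ((L + 1) * Bk) (\<lambda>s. (fst s = 1 \<and> OI (r + 1) (snd s)) \<or> (fst s = 7 \<and> BI r (p + 1) (snd s)) \<or>
     (fst s = 15 \<and> JI r p (snd s) \<and> nat (n + 1 - snd s (-5)) < nat (n + 1 - m (-5))))"
    proof (elim disjE)
      assume s1: "fst s = 7"
      then have h: "n < m (-5)" "G m0 (snd s)"
        "vw (snd s) = (arr 0 m, arr 1 m, arr 2 m, arr 3 m, m (-1), m (-2) + 1, m (-3), m (-4), m (-5), m (-6))"
        using h0 unfolding atS_def by simp_all
      have e: "arr 0 (snd s) = arr 0 m" "arr 1 (snd s) = arr 1 m" "arr 2 (snd s) = arr 2 m" "arr 3 (snd s) = arr 3 m"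
        "snd s (-1) = r" "snd s (-2) = p + 1" "snd s (-3) = m (-3)"
        using h(3) d(2,3) unfolding vw_eq by auto
      have jn: "m (-5) = n + 1" using h(1) d(10) by auto
      have cl: "clos n A (arr 3 m) (arr 1 m) r (p + 1)"
        using T3[OF d(11)] d(12) d(8) jn by auto
      have "BI r (p + 1) (snd s)"
        unfolding BI_def e using h(2) d(4,5,6,7,13) cl by auto
      then show ?thesis using s1 by (intro reach_done) auto
    next
      assume s1: "fst s = 15"
      then have h: "m (-5) \<le> n" "arr 1 m (m (-5)) = m (-1) \<or> \<not> adjm m0 n (m (-4)) (m (-5))" "G m0 (snd s)"
        "vw (snd s) = (arr 0 m, arr 1 m, arr 2 m, arr 3 m, m (-1), m (-2), m (-3), m (-4), m (-5) + 1, m (-6))"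
        using h0 unfolding atS_def by simp_all
      have e: "arr 0 (snd s) = arr 0 m" "arr 1 (snd s) = arr 1 m" "arr 2 (snd s) = arr 2 m" "arr 3 (snd s) = arr 3 m"
        "snd s (-1) = r" "snd s (-2) = p" "snd s (-3) = m (-3)" "snd s (-4) = m (-4)" "snd s (-5) = m (-5) + 1"
        using h(4) d(2,3) unfolding vw_eq by auto
      have pc: "pclos n A (m (-4)) (arr 1 m) r (m (-5) + 1)"
        using T4[OF d(12)] h(2) d(2) by auto
      have "JI r p (snd s)"
        unfolding JI_def e using h(1,3) d(4-9,11,13) pc by auto
      moreover have "nat (n + 1 - snd s (-5)) < nat (n + 1 - m (-5))" using e h(1) by auto
      ultimately show ?thesis using s1 by (intro reach_done) auto
    next
      assume s1: "fst s = 51"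
      then have h: "m (-5) \<le> n" "arr 1 m (m (-5)) \<noteq> m (-1)" "adjm m0 n (m (-4)) (m (-5))" "G m0 (snd s)"
        "vw (snd s) = (arr 0 m, (arr 1 m)(m (-5) := m (-1)), (arr 2 m)(m (-5) := m (-2)), arr 3 m, m (-1), m (-2), m (-3), m (-4), m (-5), 1)"
        using h0 unfolding atS_def by simp_all
      have e: "arr 0 (snd s) = arr 0 m" "arr 1 (snd s) = (arr 1 m)(m (-5) := r)" "arr 2 (snd s) = (arr 2 m)(m (-5) := p)" "arr 3 (snd s) = arr 3 m"
        "snd s (-1) = r" "snd s (-2) = p" "snd s (-3) = m (-3)" "snd s (-4) = m (-4)" "snd s (-5) = m (-5)" "snd s (-6) = 1"
        using h(5) d(2,3) unfolding vw_eq by auto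
      note t = T5[OF d(4) d(5) d(11) d(12)[unfolded d(8)] d(13) d(9) h(1) h(2)[unfolded d(2)] h(3)[unfolded d(8)] d(6) d(7)]
      have "KI r p (m (-5)) (snd s)"
        unfolding KI_def e using h(1,4) d(6-9) t by auto
      then have "reach prog (51, snd s) ((L + 1) * Bk) (\<lambda>s. (fst s = 1 \<and> OI (r + 1) (snd s)) \<or>
         (fst s = 15 \<and> JI r p (snd s) \<and> snd s (-5) = m (-5) + 1))"
        by (rule k_loop)
      then have "reach prog (51, snd s) ((L + 1) * Bk) (\<lambda>s. (fst s = 1 \<and> OI (r + 1) (snd s)) \<or> (fst s = 7 \<and> BI r (p + 1) (snd s)) \<or>
         (fst s = 15 \<and> JI r p (snd s) \<and> nat (n + 1 - snd s (-5)) < nat (n + 1 - m (-5))))"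
        by (rule reach_mono) (use h(1) in auto)
      moreover have "s = (51, snd s)" using s1 by (cases s) auto
      ultimately show ?thesis by simp
    qed
  qed
qed


lemma j_loop:
  assumes ji: "JI r p m"
  shows "reach prog (15, m) ((L + 1) * Bj) (\<lambda>s. (fst s = 1 \<and> OI (r + 1) (snd s)) \<or> (fst s = 7 \<and> BI r (p + 1) (snd s)))"
proof -
  let ?I = "\<lambda>s::ram_state. fst s = 15 \<and> JI r p (snd s)"
  let ?mu = "\<lambda>s::ram_state. nat (n + 1 - snd s (-5))"
  let ?Q = "\<lambda>s::ram_state. (fst s = 1 \<and> OI (r + 1) (snd s)) \<or> (fst s = 7 \<and> BI r (p + 1) (snd s))"
  have "reach prog (15, m) ((?mu (15, m) + 1) * Bj) ?Q"
  proof (rule reach_loop[where I = ?I])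
    fix s assume I: "?I s"
    obtain pc mm where s: "s = (pc, mm)" by (cases s)
    have pc: "pc = 15" and jm: "JI r p mm" using I s by auto
    show "reach prog s Bj (\<lambda>s'. ?Q s' \<or> (?I s' \<and> ?mu s' < ?mu s))"
      unfolding s pc by (rule reach_mono[OF j_iter[OF jm]]) auto
  next
    show "?I (15, m)" using ji by simp
  qed
  moreover have "?mu (15, m) \<le> L" using JI_D(9)[OF ji] unfolding L_def by auto
  ultimately show ?thesis
    by (elim reach_mono) (simp_all add: mult_right_mono)
qed

definition "Bb = 10 + (L + 1) * Bj"

lemma bfs_iter:
  assumes bi: "BI r p m"
  shows "reach prog (7, m) Bb (\<lambda>s. GOOD s \<or> (fst s = 1 \<and> OI (r + 1) (snd s)) \<or>
     (fst s = 7 \<and> BI r (p + 1) (snd s) \<and> nat (n + 1 - (p + 1)) < nat (n + 1 - p)))"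
proof -
  note d = BI_D[OF bi]
  note cf = core_facts[OF d(4)]
  note r = blk_bfs[OF d(1) m00 refl refl refl refl refl refl refl refl refl refl d(6)[folded d(3)]]
  show ?thesis unfolding Bb_def
  proof (rule reach_trans[OF r])
    fix s :: ram_state assume h0: "atS {108, 15} (\<lambda>s.
     (fst s = 108 \<longrightarrow> m (-3) < m (-2) \<and> snd s 0 = 0) \<and>
     (fst s = 15 \<longrightarrow> m (-2) \<le> m (-3) \<and> G m0 (snd s) \<and> vw (snd s) = (arr 0 m, arr 1 m, arr 2 m, arr 3 m, m (-1), m (-2), m (-3), arr 3 m (m (-2)), 1, m (-6)))) s"
    have "fst s = 108 \<or> fst s = 15" using h0 unfolding atS_def by simp
    then show "reach prog s ((L + 1) * Bj) (\<lambda>s. GOOD s \<or> (fst s = 1 \<and> OI (r + 1) (snd s)) \<or>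
     (fst s = 7 \<and> BI r (p + 1) (snd s) \<and> nat (n + 1 - (p + 1)) < nat (n + 1 - p)))"
    proof (elim disjE)
      assume s1: "fst s = 108"
      then have h: "m (-3) < p" "snd s 0 = 0" using h0 d(3) unfolding atS_def by simp_all
      have pq: "p = m (-3) + 1" using h(1) d(7) by auto
      have "\<not> PM n A" using Hall[OF d(4) d(5)] d(8) pq by auto
      moreover have "halted prog s" using s1 unfolding halted_def by (simp add: prog_fetch)
      ultimately have "GOOD s" unfolding GOOD_def using h(2) by auto
      then show ?thesis by (intro reach_done) auto
    next
      assume s1: "fst s = 15"
      then have h: "p \<le> m (-3)" "G m0 (snd s)"
        "vw (snd s) = (arr 0 m, arr 1 m, arr 2 m, arr 3 m, m (-1), m (-2), m (-3), arr 3 m (m (-2)), 1, m (-6))"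
        using h0 d(3) unfolding atS_def by simp_all
      have e: "arr 0 (snd s) = arr 0 m" "arr 1 (snd s) = arr 1 m" "arr 2 (snd s) = arr 2 m" "arr 3 (snd s) = arr 3 m"
        "snd s (-1) = r" "snd s (-2) = p" "snd s (-3) = m (-3)" "snd s (-4) = arr 3 m p" "snd s (-5) = 1"
        using h(3) d(2,3) unfolding vw_eq by auto
      have t: "parb n (arr 1 m) (arr 2 m) r p" "pclos n A (arr 3 m p) (arr 1 m) r 1" using T2[OF d(9)] by auto
      have "JI r p (snd s)"
        unfolding JI_def e using h(1,2) d(4-6,8) t npos by auto
      then have "reach prog (15, snd s) ((L + 1) * Bj) (\<lambda>s. (fst s = 1 \<and> OI (r + 1) (snd s)) \<or> (fst s = 7 \<and> BI r (p + 1) (snd s)))"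
        by (rule j_loop)
      then have "reach prog (15, snd s) ((L + 1) * Bj) (\<lambda>s. GOOD s \<or> (fst s = 1 \<and> OI (r + 1) (snd s)) \<or>
         (fst s = 7 \<and> BI r (p + 1) (snd s) \<and> nat (n + 1 - (p + 1)) < nat (n + 1 - p)))"
        by (rule reach_mono) (use h(1) cf(5) in auto)
      moreover have "s = (15, snd s)" using s1 by (cases s) auto
      ultimately show ?thesis by simp
    qed
  qed
qed

lemma bfs_loop:
  assumes bi: "BI r p m"
  shows "reach prog (7, m) ((L + 1) * Bb) (\<lambda>s. GOOD s \<or> (fst s = 1 \<and> OI (r + 1) (snd s)))"
proof -
  let ?I = "\<lambda>s::ram_state. fst s = 7 \<and> (\<exists>p. BI r p (snd s))"
  let ?mu = "\<lambda>s::ram_state. nat (n + 1 - snd s (-2))"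
  let ?Q = "\<lambda>s::ram_state. GOOD s \<or> (fst s = 1 \<and> OI (r + 1) (snd s))"
  have "reach prog (7, m) ((?mu (7, m) + 1) * Bb) ?Q"
  proof (rule reach_loop[where I = ?I])
    fix s assume I: "?I s"
    obtain pc mm where s: "s = (pc, mm)" by (cases s)
    obtain p' where pc: "pc = 7" and bm: "BI r p' mm" using I s by auto
    have mp: "mm (-2) = p'" using BI_D(3)[OF bm] .
    have "reach prog (7, mm) Bb (\<lambda>s'. ?Q s' \<or> (?I s' \<and> ?mu s' < ?mu (7, mm)))"
    proof (rule reach_mono[OF bfs_iter[OF bm] le_refl])
      fix s' assume "GOOD s' \<or> (fst s' = 1 \<and> OI (r + 1) (snd s')) \<or>
        (fst s' = 7 \<and> BI r (p' + 1) (snd s') \<and> nat (n + 1 - (p' + 1)) < nat (n + 1 - p'))"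
      then show "?Q s' \<or> (?I s' \<and> ?mu s' < ?mu (7, mm))"
        using BI_D(3)[of r "p' + 1" "snd s'"] mp by auto
    qed
    then show "reach prog s Bb (\<lambda>s'. ?Q s' \<or> (?I s' \<and> ?mu s' < ?mu s))"
      unfolding s pc .
  next
    show "?I (7, m)" using bi by auto
  qed
  moreover have "?mu (7, m) \<le> L" using BI_D(3,6)[OF bi] unfolding L_def by auto
  ultimately show ?thesis
    by (elim reach_mono) (simp_all add: mult_right_mono)
qed

definition "Bo = 10 + (L + 1) * Bb"

lemma outer_iter:
  assumes oi: "OI r m"
  shows "reach prog (1, m) Bo (\<lambda>s. GOOD s \<or> (fst s = 1 \<and> OI (r + 1) (snd s)))"
proof -
  note d = OI_D[OF oi]
  note r = blk_outer[OF d(1) m00 refl refl refl refl refl refl refl refl refl refl]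
  show ?thesis unfolding Bo_def
  proof (rule reach_trans[OF r])
    fix s :: ram_state assume h0: "atS {106, 7} (\<lambda>s.
     (fst s = 106 \<longrightarrow> n < m (-1) \<and> snd s 0 = 1) \<and>
     (fst s = 7 \<longrightarrow> m (-1) \<le> n \<and> G m0 (snd s) \<and> vw (snd s) = (arr 0 m, arr 1 m, arr 2 m, (arr 3 m)(1 := m (-1)), m (-1), 1, 1, m (-4), m (-5), m (-6)))) s"
    have "fst s = 106 \<or> fst s = 7" using h0 unfolding atS_def by simp
    then show "reach prog s ((L + 1) * Bb) (\<lambda>s. GOOD s \<or> (fst s = 1 \<and> OI (r + 1) (snd s)))"
    proof (elim disjE)
      assume s1: "fst s = 106"
      then have h: "n < r" "snd s 0 = 1" using h0 d(2) unfolding atS_def by simp_all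
      have "r = n + 1" using h(1) d(4) by auto
      then have "PM n A" using T11 d(5) by auto
      moreover have "halted prog s" using s1 unfolding halted_def by (simp add: prog_fetch)
      ultimately have "GOOD s" unfolding GOOD_def using h(2) by auto
      then show ?thesis by (intro reach_done) auto
    next
      assume s1: "fst s = 7"
      then have h: "r \<le> n" "G m0 (snd s)"
        "vw (snd s) = (arr 0 m, arr 1 m, arr 2 m, (arr 3 m)(1 := m (-1)), m (-1), 1, 1, m (-4), m (-5), m (-6))"
        using h0 d(2) unfolding atS_def by simp_all
      have e: "arr 0 (snd s) = arr 0 m" "arr 1 (snd s) = arr 1 m" "arr 2 (snd s) = arr 2 m" "arr 3 (snd s) = (arr 3 m)(1 := r)"
        "snd s (-1) = r" "snd s (-2) = 1" "snd s (-3) = 1"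
        using h(3) d(2) unfolding vw_eq by auto
      note t = T1[OF d(5) d(3) h(1) d(6), of "arr 2 m" "arr 3 m"]
      have "BI r 1 (snd s)"
        unfolding BI_def e using h(2) t by auto
      then have "reach prog (7, snd s) ((L + 1) * Bb) (\<lambda>s. GOOD s \<or> (fst s = 1 \<and> OI (r + 1) (snd s)))"
        by (rule bfs_loop)
      moreover have "s = (7, snd s)" using s1 by (cases s) auto
      ultimately show ?thesis by simp
    qed
  qed
qed

lemma outer_loop:
  assumes oi: "OI r m"
  shows "reach prog (1, m) ((L + 1) * Bo) GOOD"
proof -
  let ?I = "\<lambda>s::ram_state. fst s = 1 \<and> (\<exists>r. OI r (snd s))"
  let ?mu = "\<lambda>s::ram_state. nat (n + 1 - snd s (-1))"
  have "reach prog (1, m) ((?mu (1, m) + 1) * Bo) GOOD"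
  proof (rule reach_loop[where I = ?I])
    fix s assume I: "?I s"
    obtain pc mm where s: "s = (pc, mm)" by (cases s)
    obtain r' where pc: "pc = 1" and om: "OI r' mm" using I s by auto
    have mr: "mm (-1) = r'" using OI_D(2)[OF om] .
    have "reach prog (1, mm) Bo (\<lambda>s'. GOOD s' \<or> (?I s' \<and> ?mu s' < ?mu (1, mm)))"
    proof (rule reach_mono[OF outer_iter[OF om] le_refl])
      fix s' assume "GOOD s' \<or> (fst s' = 1 \<and> OI (r' + 1) (snd s'))"
      then show "GOOD s' \<or> (?I s' \<and> ?mu s' < ?mu (1, mm))"
        using OI_D(2,4)[of "r' + 1" "snd s'"] mr by auto
    qed
    then show "reach prog s Bo (\<lambda>s'. GOOD s' \<or> (?I s' \<and> ?mu s' < ?mu s))"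
      unfolding s pc .
  next
    show "?I (1, m)" using oi by auto
  qed
  moreover have "?mu (1, m) \<le> L" using OI_D(2,3)[OF oi] unfolding L_def by auto
  ultimately show ?thesis
    by (elim reach_mono) (simp_all add: mult_right_mono)
qed

lemma arr_m0: "1 \<le> x \<Longrightarrow> 0 \<le> k \<Longrightarrow> arr k m0 x = 0"
  using mneg unfolding arr_def aK_def by auto

lemma main_reach: "reach prog (0, m0) (1 + (L + 1) * Bo) GOOD"
proof -
  have g: "G m0 m0" by (simp add: G_def)
  show ?thesis
  proof (rule reach_trans[OF blk_init[OF g]])
    fix s :: ram_state assume h: "fst s = 1 \<and> G m0 (snd s) \<and> vw (snd s) = vw ((snd s)(-1 := 1)) \<and> snd s (-1) = 1 \<and> vw (snd s) = vw (m0(-1 := 1))"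
    have e: "arr 0 (snd s) = arr 0 m0" "arr 1 (snd s) = arr 1 m0"
      using h unfolding vw_def by auto
    have "match_inv n A (arr 0 m0) 1" unfolding match_inv_def using arr_m0 by auto
    moreover have "\<forall>j. 1 \<le> j \<and> j \<le> n \<longrightarrow> 0 \<le> arr 1 m0 j \<and> arr 1 m0 j < 1" using arr_m0 by auto
    ultimately have "OI 1 (snd s)" unfolding OI_def e using h npos by auto
    then have "reach prog (1, snd s) ((L + 1) * Bo) GOOD" by (rule outer_loop)
    moreover have "s = (1, snd s)" using h by (cases s) auto
    ultimately show "reach prog s ((L + 1) * Bo) GOOD" by simp
  qed
qed

end



lemma enc_pts_len: "length (enc_pts ps) = 2 * length ps"
  by (induction ps) (auto simp: enc_pts_def)

lemma enc_pts_nth: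
  "k < length ps \<Longrightarrow> enc_pts ps ! (2 * k) = fst (ps ! k) \<and> enc_pts ps ! (2 * k + 1) = snd (ps ! k)"
proof (induction ps arbitrary: k)
  case Nil then show ?case by simp
next
  case (Cons a ps)
  show ?case
  proof (cases k)
    case 0 then show ?thesis by (cases a) (simp add: enc_pts_def)
  next
    case (Suc k')
    then have "k' < length ps" using Cons.prems by simp
    then have ih: "enc_pts ps ! (2 * k') = fst (ps ! k') \<and> enc_pts ps ! (2 * k' + 1) = snd (ps ! k')"
      using Cons.IH by blast
    have e: "enc_pts (a # ps) = [fst a, snd a] @ enc_pts ps" by (cases a) (simp add: enc_pts_def)
    have k2: "2 * k = Suc (Suc (2 * k'))" "2 * k + 1 = Suc (Suc (2 * k' + 1))" using Suc by auto
    have "enc_pts (a # ps) ! (2 * k) = enc_pts ps ! (2 * k')"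
      unfolding k2(1) e by (simp only: append_Cons append_Nil nth_Cons_Suc)
    moreover have "enc_pts (a # ps) ! (2 * k + 1) = enc_pts ps ! (2 * k' + 1)"
      unfolding k2(2) e by (simp only: append_Cons append_Nil nth_Cons_Suc)
    moreover have "(a # ps) ! k = ps ! k'" using Suc by simp
    ultimately show ?thesis using ih by simp
  qed
qed

lemma move_ok_iff: "move_ok v w \<longleftrightarrow> \<bar>fst v - fst w\<bar> + \<bar>snd v - snd w\<bar> \<le> 1"
proof (cases v; cases w)
  fix a b c d assume vw: "v = (a, b)" "w = (c, d)"
  have "move_ok (a, b) (c, d) \<longleftrightarrow> \<bar>a - c\<bar> + \<bar>b - d\<bar> \<le> 1"
    unfolding move_ok_def by auto
  then show ?thesis using vw by simp
qed

lemma PM_perm: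
  fixes A :: "int \<Rightarrow> int \<Rightarrow> bool" and L :: nat and R :: "nat \<Rightarrow> nat \<Rightarrow> bool"
  assumes AR: "\<And>i j. 1 \<le> i \<Longrightarrow> i \<le> int L \<Longrightarrow> 1 \<le> j \<Longrightarrow> j \<le> int L \<Longrightarrow> A i j \<longleftrightarrow> R (nat (i - 1)) (nat (j - 1))"
  shows "PM (int L) A \<longleftrightarrow> (\<exists>h. bij_betw h {..<L} {..<L} \<and> (\<forall>k<L. R k (h k)))"
proof
  assume "PM (int L) A"
  then obtain g where g: "\<forall>i. 1 \<le> i \<and> i \<le> int L \<longrightarrow> 1 \<le> g i \<and> g i \<le> int L \<and> A i (g i)" "inj_on g {1..int L}"
    unfolding PM_def by blast
  define h where "h k = nat (g (int k + 1)) - 1" for k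
  have hk: "h k < L" "R k (h k)" if "k < L" for k
  proof -
    have "1 \<le> g (int k + 1)" "g (int k + 1) \<le> int L" "A (int k + 1) (g (int k + 1))"
      using g(1)[rule_format, of "int k + 1"] that by auto
    moreover have "nat (int k + 1 - 1) = k" by simp
    moreover have "nat (g (int k + 1) - 1) = h k" unfolding h_def by simp
    ultimately show "h k < L" "R k (h k)" using AR[of "int k + 1" "g (int k + 1)"] that unfolding h_def by auto
  qed
  have inj: "inj_on h {..<L}"
  proof (rule inj_onI)
    fix k k' assume kk: "k \<in> {..<L}" "k' \<in> {..<L}" "h k = h k'"
    have "1 \<le> g (int k + 1)" "1 \<le> g (int k' + 1)"
      using g(1)[rule_format, of "int k + 1"] g(1)[rule_format, of "int k' + 1"] kk by auto
    then have "g (int k + 1) = g (int k' + 1)" using kk(3) unfolding h_def by auto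
    then have "int k + 1 = int k' + 1" using g(2) kk(1,2) by (auto dest: inj_onD)
    then show "k = k'" by simp
  qed
  have "h ` {..<L} \<subseteq> {..<L}" using hk by auto
  then have "h ` {..<L} = {..<L}" using inj by (simp add: endo_inj_surj)
  then have "bij_betw h {..<L} {..<L}" using inj unfolding bij_betw_def by auto
  then show "\<exists>h. bij_betw h {..<L} {..<L} \<and> (\<forall>k<L. R k (h k))" using hk by blast
next
  assume "\<exists>h. bij_betw h {..<L} {..<L} \<and> (\<forall>k<L. R k (h k))"
  then obtain h where h: "bij_betw h {..<L} {..<L}" "\<forall>k<L. R k (h k)" by blast
  define g where "g i = int (h (nat (i - 1))) + 1" for i
  have gi: "1 \<le> g i \<and> g i \<le> int L \<and> A i (g i)" if "1 \<le> i \<and> i \<le> int L" for i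
  proof -
    have k: "nat (i - 1) < L" using that by auto
    then have "h (nat (i - 1)) < L" using h(1) unfolding bij_betw_def by auto
    moreover have "nat (g i - 1) = h (nat (i - 1))" unfolding g_def by simp
    ultimately show ?thesis using AR[of i "g i"] that h(2) k unfolding g_def by auto
  qed
  have "inj_on g {1..int L}"
  proof (rule inj_onI)
    fix i i' assume ii: "i \<in> {1..int L}" "i' \<in> {1..int L}" "g i = g i'"
    then have "h (nat (i - 1)) = h (nat (i' - 1))" unfolding g_def by simp
    moreover have "nat (i - 1) \<in> {..<L}" "nat (i' - 1) \<in> {..<L}" using ii by auto
    ultimately have "nat (i - 1) = nat (i' - 1)" using h(1) unfolding bij_betw_def by (auto dest: inj_onD)
    then show "i = i'" using ii by auto
  qed
  then show "PM (int L) A" unfolding PM_def using gi by blast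
qed

lemma perm_transformation:
  assumes dC: "distinct Cs" and dT: "distinct Ct" and len: "length Cs = length Ct"
  shows "(\<exists>h. bij_betw h {..<length Cs} {..<length Cs} \<and> (\<forall>k<length Cs. move_ok (Cs ! k) (Ct ! h k)))
     \<longleftrightarrow> transformation (set Cs) (set Ct)"
proof -
  let ?L = "length Cs"
  have bC: "bij_betw ((!) Cs) {..<?L} (set Cs)" using bij_betw_nth[OF dC] by (simp add: lessThan_atLeast0)
  have bT: "bij_betw ((!) Ct) {..<?L} (set Ct)" using bij_betw_nth[OF dT] len by (simp add: lessThan_atLeast0)
  show ?thesis
  proof
    assume "\<exists>h. bij_betw h {..<?L} {..<?L} \<and> (\<forall>k<?L. move_ok (Cs ! k) (Ct ! h k))"
    then obtain h where h: "bij_betw h {..<?L} {..<?L}" "\<forall>k<?L. move_ok (Cs ! k) (Ct ! h k)" by blast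
    define f where "f = ((!) Ct) \<circ> h \<circ> inv_into {..<?L} ((!) Cs)"
    have bf: "bij_betw f (set Cs) (set Ct)"
      unfolding f_def using bij_betw_trans[OF bij_betw_trans[OF bij_betw_inv_into[OF bC] h(1)] bT] by (simp add: comp_assoc)
    have "\<forall>v\<in>set Cs. move_ok v (f v)"
    proof
      fix v assume v: "v \<in> set Cs"
      define k where "k = inv_into {..<?L} ((!) Cs) v"
      have vi: "v \<in> (!) Cs ` {..<?L}" using v bC by (simp add: bij_betw_def)
      have "k \<in> {..<?L}" unfolding k_def by (rule inv_into_into[OF vi])
      moreover have "Cs ! k = v" unfolding k_def by (rule f_inv_into_f[OF vi])
      ultimately have k: "k < ?L" "Cs ! k = v" by auto
      have fv: "f v = Ct ! h k" unfolding f_def k_def by simp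
      show "move_ok v (f v)" unfolding fv using h(2) k by auto
    qed
    then show "transformation (set Cs) (set Ct)" unfolding transformation_def using bf by auto
  next
    assume "transformation (set Cs) (set Ct)"
    then obtain f where f: "bij_betw f (set Cs) (set Ct)" "\<forall>v\<in>set Cs. move_ok v (f v)"
      unfolding transformation_def by blast
    define h where "h = inv_into {..<?L} ((!) Ct) \<circ> f \<circ> ((!) Cs)"
    have bh: "bij_betw h {..<?L} {..<?L}"
      unfolding h_def using bij_betw_trans[OF bij_betw_trans[OF bC f(1)] bij_betw_inv_into[OF bT]] by (simp add: comp_assoc)
    have "\<forall>k<?L. move_ok (Cs ! k) (Ct ! h k)"
    proof (intro allI impI)
      fix k assume k: "k < ?L"
      then have "f (Cs ! k) \<in> set Ct" using f(1) unfolding bij_betw_def by auto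
      then have vi: "f (Cs ! k) \<in> (!) Ct ` {..<?L}" using bT by (simp add: bij_betw_def)
      have "Ct ! h k = f (Cs ! k)" unfolding h_def comp_def by (rule f_inv_into_f[OF vi])
      then show "move_ok (Cs ! k) (Ct ! h k)" using f(2) k by auto
    qed
    then show "\<exists>h. bij_betw h {..<?L} {..<?L} \<and> (\<forall>k<?L. move_ok (Cs ! k) (Ct ! h k))" using bh by blast
  qed
qed

lemma enc_facts:
  assumes len: "length Cs = length Ct"
  defines "xs \<equiv> enc_instance Cs Ct"
  defines "m0 \<equiv> snd (init xs)"
  shows "m0 0 = int (length Cs)" "\<forall>a<0. m0 a = 0" "init xs = (0, m0)" "length xs = 1 + 4 * length Cs"
    "\<And>i. 1 \<le> i \<Longrightarrow> i \<le> int (length Cs) \<Longrightarrow> m0 (2 * i - 1) = fst (Cs ! nat (i - 1)) \<and> m0 (2 * i) = snd (Cs ! nat (i - 1))"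
    "\<And>j. 1 \<le> j \<Longrightarrow> j \<le> int (length Cs) \<Longrightarrow> m0 (2 * int (length Cs) + 2 * j - 1) = fst (Ct ! nat (j - 1)) \<and>
        m0 (2 * int (length Cs) + 2 * j) = snd (Ct ! nat (j - 1))"
proof -
  let ?L = "length Cs"
  have lx: "length xs = 1 + 4 * ?L" unfolding xs_def enc_instance_def using len by (simp add: enc_pts_len)
  have m0a: "m0 a = (if 0 \<le> a \<and> a < int (length xs) then xs ! nat a else 0)" for a
    unfolding m0_def init_def by simp
  have xsS: "xs ! Suc t = (enc_pts Cs @ enc_pts Ct) ! t" for t unfolding xs_def enc_instance_def by simp
  show "m0 0 = int ?L" using m0a[of 0] lx unfolding xs_def enc_instance_def by simp
  show "\<forall>a<0. m0 a = 0" using m0a by auto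
  show "init xs = (0, m0)" unfolding m0_def init_def by simp
  show "length xs = 1 + 4 * ?L" by (rule lx)
  fix i :: int assume i: "1 \<le> i" "i \<le> int ?L"
  define k where "k = nat (i - 1)"
  have k: "k < ?L" "nat (2 * i - 1) = Suc (2 * k)" "nat (2 * i) = Suc (2 * k + 1)" using i unfolding k_def by auto
  have e: "enc_pts Cs ! (2 * k) = fst (Cs ! k) \<and> enc_pts Cs ! (2 * k + 1) = snd (Cs ! k)" using enc_pts_nth[OF k(1)] .
  have l2: "2 * k < length (enc_pts Cs)" "2 * k + 1 < length (enc_pts Cs)" "Suc (2 * k) < length (enc_pts Cs)" using k(1) by (auto simp: enc_pts_len)
  have e2: "enc_pts Cs ! Suc (2 * k) = snd (Cs ! k)" using e by (simp only: Suc_eq_plus1)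
  have "m0 (2 * i - 1) = xs ! Suc (2 * k)" using m0a[of "2 * i - 1"] i lx k(2) by simp
  also have "\<dots> = fst (Cs ! k)" using xsS e l2 by (simp add: nth_append)
  finally have a: "m0 (2 * i - 1) = fst (Cs ! k)" .
  have "m0 (2 * i) = xs ! Suc (2 * k + 1)" using m0a[of "2 * i"] i lx k(3) by simp
  also have "\<dots> = snd (Cs ! k)" using xsS e2 l2 by (simp add: nth_append)
  finally show "m0 (2 * i - 1) = fst (Cs ! nat (i - 1)) \<and> m0 (2 * i) = snd (Cs ! nat (i - 1))"
    using a unfolding k_def by simp
next
  let ?L = "length Cs"
  have lx: "length xs = 1 + 4 * ?L" unfolding xs_def enc_instance_def using len by (simp add: enc_pts_len)
  have m0a: "m0 a = (if 0 \<le> a \<and> a < int (length xs) then xs ! nat a else 0)" for a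
    unfolding m0_def init_def by simp
  have xsS: "xs ! Suc t = (enc_pts Cs @ enc_pts Ct) ! t" for t unfolding xs_def enc_instance_def by simp
  fix j :: int assume j: "1 \<le> j" "j \<le> int ?L"
  define k where "k = nat (j - 1)"
  have k: "k < length Ct" "nat (2 * int ?L + 2 * j - 1) = Suc (2 * ?L + 2 * k)" "nat (2 * int ?L + 2 * j) = Suc (2 * ?L + (2 * k + 1))"
    using j len unfolding k_def by auto
  have e: "enc_pts Ct ! (2 * k) = fst (Ct ! k) \<and> enc_pts Ct ! (2 * k + 1) = snd (Ct ! k)" using enc_pts_nth[OF k(1)] .
  have lC: "length (enc_pts Cs) = 2 * ?L" by (simp add: enc_pts_len)
  have e2: "enc_pts Ct ! Suc (2 * k) = snd (Ct ! k)" using e by (simp only: Suc_eq_plus1)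
  have "m0 (2 * int ?L + 2 * j - 1) = xs ! Suc (2 * ?L + 2 * k)" using m0a[of "2 * int ?L + 2 * j - 1"] j lx k(2) by simp
  also have "\<dots> = fst (Ct ! k)" using xsS e lC by (simp add: nth_append)
  finally have a: "m0 (2 * int ?L + 2 * j - 1) = fst (Ct ! k)" .
  have "m0 (2 * int ?L + 2 * j) = xs ! Suc (2 * ?L + (2 * k + 1))" using m0a[of "2 * int ?L + 2 * j"] j lx k(3) by simp
  also have "\<dots> = snd (Ct ! k)" using xsS e e2 lC by (simp add: nth_append)
  finally show "m0 (2 * int ?L + 2 * j - 1) = fst (Ct ! nat (j - 1)) \<and> m0 (2 * int ?L + 2 * j) = snd (Ct ! nat (j - 1))"
    using a unfolding k_def by simp
qed

context mach
begin

lemma xpow: "(x::nat) * (c * x ^ k) = c * x ^ Suc k"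
  by (simp add: mult.left_commute)

lemma bound: "1 + (L + 1) * Bo \<le> 116 * (L + 1) ^ 5"
proof -
  define x where "x = L + 1"
  have x1: "1 \<le> x" unfolding x_def by simp
  have p: "1 \<le> x ^ k" for k using x1 by (simp add: one_le_power)
  have k: "Bk \<le> 55 * x" unfolding Bk_def x_def[symmetric] using x1 by simp
  have "Bj \<le> 40 + x * (55 * x)" unfolding Bj_def x_def[symmetric] using k by simp
  also have "\<dots> \<le> 95 * x ^ 2" using p[of 2] x1 by (simp add: power2_eq_square)
  finally have j: "Bj \<le> 95 * x ^ 2" .
  have "Bb \<le> 10 + x * (95 * x ^ 2)" unfolding Bb_def x_def[symmetric] using j by simp
  also have "\<dots> = 10 + 95 * x ^ Suc 2" by (simp only: xpow)
  also have "\<dots> = 10 + 95 * x ^ 3" by simp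
  also have "\<dots> \<le> 105 * x ^ 3" using p[of 3] by simp
  finally have b: "Bb \<le> 105 * x ^ 3" .
  have "Bo \<le> 10 + x * (105 * x ^ 3)" unfolding Bo_def x_def[symmetric] using b by simp
  also have "\<dots> = 10 + 105 * x ^ Suc 3" by (simp only: xpow)
  also have "\<dots> = 10 + 105 * x ^ 4" by simp
  also have "\<dots> \<le> 115 * x ^ 4" using p[of 4] by simp
  finally have o: "Bo \<le> 115 * x ^ 4" .
  have "1 + x * Bo \<le> 1 + x * (115 * x ^ 4)" using o by simp
  also have "\<dots> = 1 + 115 * x ^ Suc 4" by (simp only: xpow)
  also have "\<dots> = 1 + 115 * x ^ 5" by simp
  also have "\<dots> \<le> 116 * x ^ 5" using p[of 5] by simp
  finally show ?thesis unfolding x_def .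
qed

lemma main_exists:
  "\<exists>k \<le> 116 * (nat n + 1) ^ 5. halted prog ((step prog ^^ k) (0, m0)) \<and>
     (0 < snd ((step prog ^^ k) (0, m0)) 0 \<longleftrightarrow> PM n (adjm m0 n))"
proof -
  have "reach prog (0, m0) (116 * (L + 1) ^ 5) GOOD"
    using main_reach bound by (rule reach_mono) auto
  then show ?thesis unfolding reach_def GOOD_def L_def by auto
qed

end


lemma schedule1: "schedule 1 A B \<longleftrightarrow> transformation A B"
proof
  assume "schedule 1 A B"
  then obtain C where "C 0 = A" "C 1 = B" "\<forall>i<1. transformation (C i) (C (Suc i))"
    unfolding schedule_def by blast
  then show "transformation A B" by (auto simp: One_nat_def)
next
  assume t: "transformation A B"
  show "schedule 1 A B" unfolding schedule_def
    by (rule exI[of _ "\<lambda>i. if i = 0 then A else B"]) (use t in auto)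
qed

lemma input_size_ge: "length xs \<le> input_size xs"
  unfolding input_size_def by simp

theorem theorem1:
  shows "\<exists>(P :: instr list) (c :: nat) (d :: nat).
           \<forall>Cs Ct :: pos list.
             distinct Cs \<and> distinct Ct \<and> length Cs = length Ct \<longrightarrow>
             (\<exists>t. t \<le> c * (input_size (enc_instance Cs Ct) + 1) ^ d \<and>
                  decides_in P (enc_instance Cs Ct) t (schedule 1 (set Cs) (set Ct)))"
proof (rule exI[of _ prog], rule exI[of _ 116], rule exI[of _ 5], intro allI impI)
  fix Cs Ct :: "pos list"
  assume a: "distinct Cs \<and> distinct Ct \<and> length Cs = length Ct"
  then have dC: "distinct Cs" and dT: "distinct Ct" and len: "length Cs = length Ct" by auto
  define xs where "xs = enc_instance Cs Ct"
  define m0 where "m0 = snd (init xs)"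
  define n where "n = int (length Cs)"
  note ef = enc_facts[OF len, folded xs_def, folded m0_def, folded n_def]
  have mach: "mach m0 n"
    by (rule mach.intro) (use ef n_def in auto)
  have AR: "adjm m0 n i j \<longleftrightarrow> move_ok (Cs ! nat (i - 1)) (Ct ! nat (j - 1))"
    if "1 \<le> i" "i \<le> int (length Cs)" "1 \<le> j" "j \<le> int (length Cs)" for i j
    using ef(5)[of i] ef(6)[of j] that unfolding adjm_def move_ok_iff n_def by auto
  have "PM n (adjm m0 n) \<longleftrightarrow> (\<exists>h. bij_betw h {..<length Cs} {..<length Cs} \<and> (\<forall>k<length Cs. move_ok (Cs ! k) (Ct ! h k)))"
    unfolding n_def by (rule PM_perm) (rule AR[unfolded n_def])
  also have "\<dots> \<longleftrightarrow> schedule 1 (set Cs) (set Ct)"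
    using perm_transformation[OF dC dT len] schedule1 by simp
  finally have pm: "PM n (adjm m0 n) \<longleftrightarrow> schedule 1 (set Cs) (set Ct)" .
  obtain k where k: "k \<le> 116 * (nat n + 1) ^ 5" "halted prog ((step prog ^^ k) (0, m0))"
    "0 < snd ((step prog ^^ k) (0, m0)) 0 \<longleftrightarrow> PM n (adjm m0 n)"
    using mach.main_exists[OF mach] by blast
  have "nat n + 1 \<le> input_size xs + 1" using input_size_ge[of xs] ef(4) unfolding n_def by simp
  then have "(nat n + 1) ^ 5 \<le> (input_size xs + 1) ^ 5" by (rule power_mono) simp
  then have "k \<le> 116 * (input_size xs + 1) ^ 5" using k(1) by linarith
  moreover have "decides_in prog xs k (schedule 1 (set Cs) (set Ct))"
    unfolding decides_in_def ef(3) using k(2,3) pm by simp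
  ultimately have "\<exists>t. t \<le> 116 * (input_size xs + 1) ^ 5 \<and>
                  decides_in prog xs t (schedule 1 (set Cs) (set Ct))" by blast
  then show "\<exists>t. t \<le> 116 * (input_size (enc_instance Cs Ct) + 1) ^ 5 \<and>
                  decides_in prog (enc_instance Cs Ct) t (schedule 1 (set Cs) (set Ct))" unfolding xs_def .
qed

end
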